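(* Let $0<\Delta\le1$ and $T=\frac{\lambda_1}{2\Delta}\ln\frac1\Delta$. There exist constants $C_5,C_6>0$, independent of $P$ and $\Delta$, such that for all $P>0$ the quantizer $q_o$ with these parameters satisfies $$\mathtt{out}_{{\rm loss},q_o}\le C_5\,e^{-C_6/P}\,\frac{1+\sqrt P}{P}\,\Delta^{1/2}.$$
   Context: $H_1,H_2$ are independent exponential random variables with means $\lambda_1\ge\lambda_2>0$ (density $e^{-x/\lambda_i}/\lambda_i$, $x>0$); $P>0$ is total power; $r_{\rm th}>0$ is a fixed target rate. For $a\ge b\ge0$, $a>0$, let $A(a,b)=\frac{2b}{\sqrt{(a+b)^2+4ab^2P}+a+b}$. Full CSI: $r_{\max}=\log_2(1+PH_1A(H_1,H_2))$ if $H_1\ge H_2$, $r_{\max}=\log_2(1+PH_2A(H_2,H_1))$ if $H_1<H_2$; $\mathtt{out}_{\min}=\Pr\{r_{\max}<r_{\rm th}\}$. Quantizer with $\Delta>0$, $T\ge0$: $q_o(x)=\lceil x/\Delta\rceil\Delta$ for $x\le T\Delta$, $q_o(x)=(T+1)\Delta$ for $x>T\Delta$. Let $a_i=q_o(H_i)$; if $a_1\ge a_2$ let $(s,w)=(1,2)$, otherwise $(s,w)=(2,1)$; $\alpha_q=A(a_s,a_w)$ if $a_1,a_2>0$, else $\alpha_q=0$. Actual rates $R_s=\log_2(1+P\alpha_qH_s)$, $R_w=\log_2\big(1+\frac{PH_w(1-\alpha_q)}{PH_w\alpha_q+1}\big)$, $r_q=\min\{R_1,R_2\}$, $\mathtt{out}_q=\Pr\{r_q<r_{\rm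 th}\}$, $\mathtt{out}_{{\rm loss},q_o}=\mathtt{out}_q-\mathtt{out}_{\min}$. *)

theory Defs
  imports "HOL-Analysis.Analysis"
begin

definition Afun :: "real \<Rightarrow> real \<Rightarrow> real \<Rightarrow> real" where
  "Afun P a b = 2 * b / (sqrt ((a + b)^2 + 4 * a * b^2 * P) + a + b)"

definition rmax :: "real \<Rightarrow> real \<Rightarrow> real \<Rightarrow> real" where
  "rmax P h1 h2 = (if h1 \<ge> h2 then log 2 (1 + P * h1 * Afun P h1 h2)
                   else log 2 (1 + P * h2 * Afun P h2 h1))"

definition qo :: "real \<Rightarrow> real \<Rightarrow> real \<Rightarrow> real" where
  "qo \<Delta> T x = (if x \<le> T * \<Delta> then of_int \<lceil>x / \<Delta>\<rceil> * \<Delta> else (T + 1) * \<Delta>)"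

definition alpha_q :: "real \<Rightarrow> real \<Rightarrow> real \<Rightarrow> real \<Rightarrow> real \<Rightarrow> real" where
  "alpha_q P \<Delta> T h1 h2 =
     (let a1 = qo \<Delta> T h1; a2 = qo \<Delta> T h2 in
      if a1 > 0 \<and> a2 > 0 then (if a1 \<ge> a2 then Afun P a1 a2 else Afun P a2 a1) else 0)"

definition rq :: "real \<Rightarrow> real \<Rightarrow> real \<Rightarrow> real \<Rightarrow> real \<Rightarrow> real" where
  "rq P \<Delta> T h1 h2 =
     (let a1 = qo \<Delta> T h1; a2 = qo \<Delta> T h2; al = alpha_q P \<Delta> T h1 h2;
          hs = (if a1 \<ge> a2 then h1 else h2); hw = (if a1 \<ge> a2 then h2 else h1);
          Rs = log 2 (1 + P * al * hs);
          Rw = log 2 (1 + P * hw * (1 - al) / (P * hw * al + 1))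
      in min Rs Rw)"

definition exp_dens :: "real \<Rightarrow> real \<Rightarrow> real" where
  "exp_dens l x = (if x > 0 then exp (- x / l) / l else 0)"

definition chan :: "real \<Rightarrow> real \<Rightarrow> (real \<times> real) measure" where
  "chan l1 l2 = density (lborel \<Otimes>\<^sub>M lborel) (\<lambda>(x, y). ennreal (exp_dens l1 x * exp_dens l2 y))"

definition out_min :: "real \<Rightarrow> real \<Rightarrow> real \<Rightarrow> real \<Rightarrow> real" where
  "out_min l1 l2 P rth = measure (chan l1 l2) {(h1, h2). rmax P h1 h2 < rth}"

definition out_q :: "real \<Rightarrow> real \<Rightarrow> real \<Rightarrow> real \<Rightarrow> real \<Rightarrow> real \<Rightarrow> real" where
  "out_q l1 l2 P rth \<Delta> T = measure (chan l1 l2) {(h1, h2). rq P \<Delta> T h1 h2 < rth}"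

definition out_loss :: "real \<Rightarrow> real \<Rightarrow> real \<Rightarrow> real \<Rightarrow> real \<Rightarrow> real \<Rightarrow> real" where
  "out_loss l1 l2 P rth \<Delta> T = out_q l1 l2 P rth \<Delta> T - out_min l1 l2 P rth"

end

theory Submission
  imports Defs
begin

lemma B: "l > 0 \<Longrightarrow> filterlim (\<lambda>x::real. - x / l) at_bot at_top"
proof -
  assume l: "l > 0"
  have "filterlim (\<lambda>x::real. (1/l) * x) at_top at_top"
    using l by (intro filterlim_tendsto_pos_mult_at_top[OF tendsto_const] filterlim_ident) auto
  then have "filterlim (\<lambda>x::real. - ((1/l) * x)) at_bot at_top"
    by (simp add: filterlim_uminus_at_bot)
  then show ?thesis by simp
qed
lemma C: "DERIV (\<lambda>x. - exp (- x / l)) x :> exp (- x / l) / l"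
proof -
  have "DERIV (\<lambda>x. - exp (- x / l)) x :> - (exp (- x / l) * (- 1 / l))"
    by (intro derivative_intros DERIV_cdivide)
  then show ?thesis by simp
qed
lemma exp_dens_nonneg: "l > 0 \<Longrightarrow> 0 \<le> exp_dens l x"
  by (simp add: exp_dens_def)

lemma exp_dens_meas[measurable]: "exp_dens l \<in> borel_measurable borel"
  unfolding exp_dens_def by measurable

lemma tail_int:
  assumes l: "l > 0" and x0: "x0 \<ge> 0"
  shows "(\<integral>\<^sup>+x. ennreal (exp_dens l x) * indicator {x0..} x \<partial>lborel) \<le> ennreal (exp (- x0 / l))"
proof -
  have "(\<integral>\<^sup>+x. ennreal (exp_dens l x) * indicator {x0..} x \<partial>lborel)
      \<le> (\<integral>\<^sup>+x. ennreal (exp (- x / l) / l) * indicator {x0..} x \<partial>lborel)"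
    by (rule nn_integral_mono) (auto simp: exp_dens_def split: split_indicator)
  also have "\<dots> = ennreal (0 - (- exp (- x0 / l)))"
  proof (rule nn_integral_FTC_atLeast[where F="\<lambda>x. - exp (- x / l)" and T=0])
    show "(\<lambda>x. exp (- x / l) / l) \<in> borel_measurable borel" by measurable
    show "0 \<le> exp (- x / l) / l" for x using l by simp
    show "((\<lambda>x. - exp (- x / l)) \<longlongrightarrow> 0) at_top"
    proof -
      have "((\<lambda>x. exp (- x / l)) \<longlongrightarrow> 0) at_top"
        by (rule filterlim_compose[OF exp_at_bot B[OF l]])
      then have "((\<lambda>x. - exp (- x / l)) \<longlongrightarrow> - 0) at_top"
        by (rule tendsto_minus)
      then show ?thesis by simp
    qed
    show "DERIV (\<lambda>x. - exp (- x / l)) x :> exp (- x / l) / l" for x by (rule C)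
  qed
  finally show ?thesis by simp
qed

lemma dens_le: "l > 0 \<Longrightarrow> m \<ge> 0 \<Longrightarrow> m \<le> y \<Longrightarrow> exp_dens l y \<le> exp (- m / l) / l"
  by (auto simp: exp_dens_def divide_right_mono)

lemma sets_chan[simp]: "sets (chan l1 l2) = sets (borel \<Otimes>\<^sub>M borel)"
  unfolding chan_def by (simp add: sets_pair_measure_cong[OF sets_lborel sets_lborel])

lemma emeasure_chan:
  assumes S[measurable]: "S \<in> sets (borel \<Otimes>\<^sub>M borel)"
  shows "emeasure (chan l1 l2) S =
    (\<integral>\<^sup>+x. \<integral>\<^sup>+y. ennreal (exp_dens l1 x * exp_dens l2 y) * indicator S (x, y) \<partial>lborel \<partial>lborel)"
proof -
  have "emeasure (chan l1 l2) S = (\<integral>\<^sup>+z. ennreal (exp_dens l1 (fst z) * exp_dens l2 (snd z)) * indicator S z \<partial>(lborel \<Otimes>\<^sub>M lborel))"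
  proof -
    have "emeasure (chan l1 l2) S = (\<integral>\<^sup>+z. (\<lambda>(x, y). ennreal (exp_dens l1 x * exp_dens l2 y)) z * indicator S z \<partial>(lborel \<Otimes>\<^sub>M lborel))"
      unfolding chan_def by (rule emeasure_density) (simp_all add: S)
    then show ?thesis by (simp add: case_prod_beta)
  qed
  also have "\<dots> = (\<integral>\<^sup>+x. \<integral>\<^sup>+y. ennreal (exp_dens l1 x * exp_dens l2 y) * indicator S (x, y) \<partial>lborel \<partial>lborel)"
    using lborel.nn_integral_fst[of "\<lambda>z. ennreal (exp_dens l1 (fst z) * exp_dens l2 (snd z)) * indicator S z" lborel] by simp
  finally show ?thesis .
qed

lemma emeasure_chan2:
  assumes S[measurable]: "S \<in> sets (borel \<Otimes>\<^sub>M borel)"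
  shows "emeasure (chan l1 l2) S =
    (\<integral>\<^sup>+y. \<integral>\<^sup>+x. ennreal (exp_dens l1 x * exp_dens l2 y) * indicator S (x, y) \<partial>lborel \<partial>lborel)"
proof -
  have "emeasure (chan l1 l2) S = (\<integral>\<^sup>+z. ennreal (exp_dens l1 (fst z) * exp_dens l2 (snd z)) * indicator S z \<partial>(lborel \<Otimes>\<^sub>M lborel))"
  proof -
    have "emeasure (chan l1 l2) S = (\<integral>\<^sup>+z. (\<lambda>(x, y). ennreal (exp_dens l1 x * exp_dens l2 y)) z * indicator S z \<partial>(lborel \<Otimes>\<^sub>M lborel))"
      unfolding chan_def by (rule emeasure_density) (simp_all add: S)
    then show ?thesis by (simp add: case_prod_beta)
  qed
  also have "\<dots> = (\<integral>\<^sup>+y. \<integral>\<^sup>+x. ennreal (exp_dens l1 x * exp_dens l2 y) * indicator S (x, y) \<partial>lborel \<partial>lborel)"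
    using lborel_pair.nn_integral_snd[of "\<lambda>z. ennreal (exp_dens l1 (fst z) * exp_dens l2 (snd z)) * indicator S z"] by simp
  finally show ?thesis .
qed

lemma pairset_meas:
  assumes "Measurable.pred (borel \<Otimes>\<^sub>M borel) (\<lambda>z. P (fst z) (snd z))"
  shows "{(x, y). P x y} \<in> sets (borel \<Otimes>\<^sub>M borel)"
proof -
  have "{(x, y). P x y} = {z \<in> space (borel \<Otimes>\<^sub>M borel). P (fst z) (snd z)}"
    by (auto simp: space_pair_measure)
  then show ?thesis using assms by simp
qed

lemma bandY:
  assumes l1: "l1 > 0" and l2: "l2 > 0" and x0: "x0 \<ge> 0" and m: "m \<ge> 0" and w: "w \<ge> 0"
    and f[measurable]: "f \<in> borel_measurable borel" and fm: "\<And>x. m \<le> f x"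
  shows "emeasure (chan l1 l2) {(x, y). x0 \<le> x \<and> f x \<le> y \<and> y \<le> f x + w}
     \<le> ennreal (exp (- x0 / l1) * (exp (- m / l2) / l2 * w))"
proof -
  let ?S = "{(x, y). x0 \<le> x \<and> f x \<le> y \<and> y \<le> f x + w}"
  have S: "?S \<in> sets (borel \<Otimes>\<^sub>M borel)" by (rule pairset_meas) measurable
  have inner: "(\<integral>\<^sup>+y. ennreal (exp_dens l1 x * exp_dens l2 y) * indicator ?S (x, y) \<partial>lborel)
      \<le> ennreal (exp_dens l1 x) * indicator {x0..} x * ennreal (exp (- m / l2) / l2 * w)" for x
  proof -
    have "(\<integral>\<^sup>+y. ennreal (exp_dens l1 x * exp_dens l2 y) * indicator ?S (x, y) \<partial>lborel)
      \<le> (\<integral>\<^sup>+y. (ennreal (exp_dens l1 x) * indicator {x0..} x * ennreal (exp (- m / l2) / l2)) * indicator {f x .. f x + w} y \<partial>lborel)"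
    proof (intro nn_integral_mono)
      fix y
      show "ennreal (exp_dens l1 x * exp_dens l2 y) * indicator ?S (x, y)
         \<le> (ennreal (exp_dens l1 x) * indicator {x0..} x * ennreal (exp (- m / l2) / l2)) * indicator {f x .. f x + w} y"
      proof (cases "(x, y) \<in> ?S")
        case True
        then have "m \<le> y" using fm[of x] by auto
        then have "exp_dens l2 y \<le> exp (- m / l2) / l2" using dens_le[OF l2 m] by auto
        then have "exp_dens l1 x * exp_dens l2 y \<le> exp_dens l1 x * (exp (- m / l2) / l2)"
          using exp_dens_nonneg[OF l1] by (intro mult_left_mono) auto
        then have "ennreal (exp_dens l1 x * exp_dens l2 y) \<le> ennreal (exp_dens l1 x * (exp (- m / l2) / l2))"
          by (rule ennreal_leI)
        moreover have "ennreal (exp_dens l1 x * (exp (- m / l2) / l2)) = ennreal (exp_dens l1 x) * ennreal (exp (- m / l2) / l2)"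
          using exp_dens_nonneg[OF l1] l2 by (intro ennreal_mult) auto
        ultimately show ?thesis using True by simp
      qed simp
    qed
    also have "\<dots> = ennreal (exp_dens l1 x) * indicator {x0..} x * ennreal (exp (- m / l2) / l2) * ennreal w"
      using w by (simp add: nn_integral_cmult_indicator)
    also have "\<dots> = ennreal (exp_dens l1 x) * indicator {x0..} x * ennreal (exp (- m / l2) / l2 * w)"
      using w l2 by (simp add: ennreal_mult[symmetric] mult.assoc del: ennreal_mult)
    finally show ?thesis .
  qed
  have "emeasure (chan l1 l2) ?S \<le> (\<integral>\<^sup>+x. ennreal (exp_dens l1 x) * indicator {x0..} x * ennreal (exp (- m / l2) / l2 * w) \<partial>lborel)"
    unfolding emeasure_chan[OF S] by (rule nn_integral_mono) (rule inner)
  also have "\<dots> = (\<integral>\<^sup>+x. ennreal (exp_dens l1 x) * indicator {x0..} x \<partial>lborel) * ennreal (exp (- m / l2) / l2 * w)"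
    by (rule nn_integral_multc) measurable
  also have "\<dots> \<le> ennreal (exp (- x0 / l1)) * ennreal (exp (- m / l2) / l2 * w)"
    by (rule mult_right_mono[OF tail_int[OF l1 x0]]) simp
  also have "\<dots> = ennreal (exp (- x0 / l1) * (exp (- m / l2) / l2 * w))"
    using w l2 by (subst ennreal_mult) auto
  finally show ?thesis .
qed


lemma bandX:
  assumes l1: "l1 > 0" and l2: "l2 > 0" and y0: "y0 \<ge> 0" and m: "m \<ge> 0" and w: "w \<ge> 0"
    and f[measurable]: "f \<in> borel_measurable borel" and fm: "\<And>y. m \<le> f y"
  shows "emeasure (chan l1 l2) {(x, y). y0 \<le> y \<and> f y \<le> x \<and> x \<le> f y + w}
     \<le> ennreal (exp (- y0 / l2) * (exp (- m / l1) / l1 * w))"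
proof -
  let ?S = "{(x, y). y0 \<le> y \<and> f y \<le> x \<and> x \<le> f y + w}"
  have S: "?S \<in> sets (borel \<Otimes>\<^sub>M borel)" by (rule pairset_meas) measurable
  have inner: "(\<integral>\<^sup>+x. ennreal (exp_dens l1 x * exp_dens l2 y) * indicator ?S (x, y) \<partial>lborel)
      \<le> ennreal (exp_dens l2 y) * indicator {y0..} y * ennreal (exp (- m / l1) / l1 * w)" for y
  proof -
    have "(\<integral>\<^sup>+x. ennreal (exp_dens l1 x * exp_dens l2 y) * indicator ?S (x, y) \<partial>lborel)
      \<le> (\<integral>\<^sup>+x. (ennreal (exp_dens l2 y) * indicator {y0..} y * ennreal (exp (- m / l1) / l1)) * indicator {f y .. f y + w} x \<partial>lborel)"
    proof (rule nn_integral_mono)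
      fix x
      show "ennreal (exp_dens l1 x * exp_dens l2 y) * indicator ?S (x, y)
         \<le> (ennreal (exp_dens l2 y) * indicator {y0..} y * ennreal (exp (- m / l1) / l1)) * indicator {f y .. f y + w} x"
      proof (cases "(x, y) \<in> ?S")
        case True
        then have "m \<le> x" using fm[of y] by auto
        then have "exp_dens l1 x \<le> exp (- m / l1) / l1" using dens_le[OF l1 m] by auto
        then have "exp_dens l1 x * exp_dens l2 y \<le> (exp (- m / l1) / l1) * exp_dens l2 y"
          by (rule mult_right_mono) (rule exp_dens_nonneg[OF l2])
        then have "exp_dens l1 x * exp_dens l2 y \<le> exp_dens l2 y * (exp (- m / l1) / l1)"
          by (metis mult.commute)
        then have "ennreal (exp_dens l1 x * exp_dens l2 y) \<le> ennreal (exp_dens l2 y * (exp (- m / l1) / l1))"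
          by (rule ennreal_leI)
        moreover have "ennreal (exp_dens l2 y * (exp (- m / l1) / l1)) = ennreal (exp_dens l2 y) * ennreal (exp (- m / l1) / l1)"
          using exp_dens_nonneg[OF l2] l1 by (intro ennreal_mult) auto
        ultimately show ?thesis using True by simp
      qed simp
    qed
    also have "\<dots> = ennreal (exp_dens l2 y) * indicator {y0..} y * ennreal (exp (- m / l1) / l1) * ennreal w"
      using w by (simp add: nn_integral_cmult_indicator)
    also have "\<dots> = ennreal (exp_dens l2 y) * indicator {y0..} y * ennreal (exp (- m / l1) / l1 * w)"
      using w l1 by (simp add: ennreal_mult[symmetric] mult.assoc del: ennreal_mult)
    finally show ?thesis .
  qed
  have "emeasure (chan l1 l2) ?S \<le> (\<integral>\<^sup>+y. ennreal (exp_dens l2 y) * indicator {y0..} y * ennreal (exp (- m / l1) / l1 * w) \<partial>lborel)"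
    unfolding emeasure_chan2[OF S] by (rule nn_integral_mono) (rule inner)
  also have "\<dots> = (\<integral>\<^sup>+y. ennreal (exp_dens l2 y) * indicator {y0..} y \<partial>lborel) * ennreal (exp (- m / l1) / l1 * w)"
    by (rule nn_integral_multc) measurable
  also have "\<dots> \<le> ennreal (exp (- y0 / l2)) * ennreal (exp (- m / l1) / l1 * w)"
    by (rule mult_right_mono[OF tail_int[OF l2 y0]]) simp
  also have "\<dots> = ennreal (exp (- y0 / l2) * (exp (- m / l1) / l1 * w))"
    using w l1 by (subst ennreal_mult) auto
  finally show ?thesis .
qed

lemma rect:
  assumes l1: "l1 > 0" and l2: "l2 > 0" and x0: "x0 \<ge> 0" and y0: "y0 \<ge> 0"
  shows "emeasure (chan l1 l2) {(x, y). x0 \<le> x \<and> y0 \<le> y} \<le> ennreal (exp (- x0 / l1) * exp (- y0 / l2))"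
proof -
  let ?S = "{(x, y). x0 \<le> x \<and> y0 \<le> y}"
  have S: "?S \<in> sets (borel \<Otimes>\<^sub>M borel)" by (rule pairset_meas) measurable
  have inner: "(\<integral>\<^sup>+y. ennreal (exp_dens l1 x * exp_dens l2 y) * indicator ?S (x, y) \<partial>lborel)
      \<le> ennreal (exp_dens l1 x) * indicator {x0..} x * ennreal (exp (- y0 / l2))" for x
  proof -
    have "(\<integral>\<^sup>+y. ennreal (exp_dens l1 x * exp_dens l2 y) * indicator ?S (x, y) \<partial>lborel)
       = (\<integral>\<^sup>+y. (ennreal (exp_dens l1 x) * indicator {x0..} x) * (ennreal (exp_dens l2 y) * indicator {y0..} y) \<partial>lborel)"
      using exp_dens_nonneg[OF l1] exp_dens_nonneg[OF l2]
      by (intro nn_integral_cong) (simp add: ennreal_mult split: split_indicator)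
    also have "\<dots> = (ennreal (exp_dens l1 x) * indicator {x0..} x) * (\<integral>\<^sup>+y. ennreal (exp_dens l2 y) * indicator {y0..} y \<partial>lborel)"
      by (rule nn_integral_cmult) measurable
    also have "\<dots> \<le> (ennreal (exp_dens l1 x) * indicator {x0..} x) * ennreal (exp (- y0 / l2))"
      by (rule mult_left_mono[OF tail_int[OF l2 y0]]) simp
    finally show ?thesis .
  qed
  have "emeasure (chan l1 l2) ?S \<le> (\<integral>\<^sup>+x. ennreal (exp_dens l1 x) * indicator {x0..} x * ennreal (exp (- y0 / l2)) \<partial>lborel)"
    unfolding emeasure_chan[OF S] by (rule nn_integral_mono) (rule inner)
  also have "\<dots> = (\<integral>\<^sup>+x. ennreal (exp_dens l1 x) * indicator {x0..} x \<partial>lborel) * ennreal (exp (- y0 / l2))"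
    by (rule nn_integral_multc) measurable
  also have "\<dots> \<le> ennreal (exp (- x0 / l1)) * ennreal (exp (- y0 / l2))"
    by (rule mult_right_mono[OF tail_int[OF l1 x0]]) simp
  also have "\<dots> = ennreal (exp (- x0 / l1) * exp (- y0 / l2))"
    by (subst ennreal_mult) auto
  finally show ?thesis .
qed

lemma zeroset:
  assumes l1: "l1 > 0" and l2: "l2 > 0"
  shows "emeasure (chan l1 l2) {(x, y). x \<le> 0 \<or> y \<le> 0} = 0"
proof -
  let ?S = "{(x::real, y::real). x \<le> 0 \<or> y \<le> 0}"
  have S: "?S \<in> sets (borel \<Otimes>\<^sub>M borel)" by (rule pairset_meas) measurable
  have z: "\<And>x y. ennreal (exp_dens l1 x * exp_dens l2 y) * indicator ?S (x, y) = 0"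
    by (auto simp: exp_dens_def indicator_def)
  show ?thesis unfolding emeasure_chan[OF S] z by simp
qed

lemma chan_total:
  assumes l1: "l1 > 0" and l2: "l2 > 0"
  shows "emeasure (chan l1 l2) (space (chan l1 l2)) \<le> 1"
proof -
  have sp: "space (chan l1 l2) = {(x, y). 0 \<le> x \<and> 0 \<le> y} \<union> {(x, y). x \<le> 0 \<or> y \<le> 0}"
    by (auto simp: chan_def space_pair_measure)
  have S1: "{(x::real, y::real). 0 \<le> x \<and> 0 \<le> y} \<in> sets (chan l1 l2)" by (simp only: sets_chan) (rule pairset_meas, measurable)
  have S2: "{(x::real, y::real). x \<le> 0 \<or> y \<le> 0} \<in> sets (chan l1 l2)" by (simp only: sets_chan) (rule pairset_meas, measurable)
  have "emeasure (chan l1 l2) (space (chan l1 l2)) \<le> emeasure (chan l1 l2) {(x, y). 0 \<le> x \<and> 0 \<le> y} + emeasure (chan l1 l2) {(x, y). x \<le> 0 \<or> y \<le> 0}"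
    unfolding sp by (rule emeasure_subadditive[OF S1 S2])
  also have "\<dots> \<le> ennreal (exp (- 0 / l1) * exp (- 0 / l2)) + 0"
    using rect[OF l1 l2, of 0 0] zeroset[OF l1 l2] by simp
  finally show ?thesis by simp
qed

lemma chan_finite: "l1 > 0 \<Longrightarrow> l2 > 0 \<Longrightarrow> finite_measure (chan l1 l2)"
  by (rule finite_measureI) (use chan_total[of l1 l2] in \<open>auto simp: top_unique\<close>)

definition qA :: "real \<Rightarrow> real \<Rightarrow> real \<Rightarrow> real \<Rightarrow> real" where
  "qA P a b t = P * a * b * t^2 + (a + b) * t - b"

lemma disc_nn:
  fixes a b P :: real
  assumes "a > 0" "b > 0" "P > 0"
  shows "0 \<le> (a + b)^2 + 4 * a * b^2 * P"
  using assms by (intro add_nonneg_nonneg mult_nonneg_nonneg) (auto simp: less_imp_le)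

lemma A_pos:
  assumes "a > 0" "b > 0" "P > 0"
  shows "Afun P a b > 0"
proof -
  have "sqrt ((a + b)^2 + 4 * a * b^2 * P) \<ge> 0" using disc_nn[OF assms] by simp
  then have "0 < sqrt ((a + b)^2 + 4 * a * b^2 * P) + a + b" using assms by linarith
  then show ?thesis using assms unfolding Afun_def by (intro divide_pos_pos) auto
qed

lemma A_root:
  assumes a: "a > 0" and b: "b > 0" and P: "P > 0"
  shows "qA P a b (Afun P a b) = 0"
proof -
  define s where "s = sqrt ((a + b)^2 + 4 * a * b^2 * P)"
  have s0: "s \<ge> 0" unfolding s_def using disc_nn[OF a b P] by simp
  have nn: "0 \<le> (a + b)^2 + 4 * a * b^2 * P" using disc_nn[OF a b P] .
  have s2: "s^2 = (a + b)^2 + 4 * a * b^2 * P"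
    unfolding s_def using nn by simp
  have d: "s + a + b > 0" using s0 a b by simp
  define d where "d = s + a + b"
  have "Afun P a b = 2 * b / d" unfolding Afun_def s_def d_def by simp
  have "qA P a b (2 * b / d) * d^2 = 4 * P * a * b^3 + 2 * b * (a + b) * d - b * d^2"
    unfolding qA_def using d unfolding d_def[symmetric] by (simp add: field_simps power2_eq_square power3_eq_cube)
  also have "\<dots> = b * (4 * a * b^2 * P + (a+b)^2 - s^2)"
    unfolding d_def by (simp add: algebra_simps power2_eq_square power3_eq_cube)
  also have "\<dots> = 0" using s2 by simp
  finally have "qA P a b (2 * b / d) * d^2 = 0" .
  then have "qA P a b (2 * b / d) = 0" using d unfolding d_def[symmetric] by simp
  then show ?thesis using \<open>Afun P a b = 2 * b / d\<close> by simp
qed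

lemma qA_strict_mono:
  assumes "a > 0" "b > 0" "P > 0" "0 \<le> t1" "t1 < t2"
  shows "qA P a b t1 < qA P a b t2"
proof -
  have "qA P a b t2 - qA P a b t1 = (t2 - t1) * (P * a * b * (t1 + t2) + a + b)"
    unfolding qA_def by (simp add: algebra_simps power2_eq_square)
  moreover have "P * a * b * (t1 + t2) + a + b > 0"
    using assms by (intro add_pos_pos) (auto intro!: add_nonneg_pos mult_nonneg_nonneg)
  moreover have "(t2 - t1) * (P * a * b * (t1 + t2) + a + b) > 0"
    using assms calculation by (intro mult_pos_pos) auto
  ultimately show ?thesis by linarith
qed

lemma A_le_of:
  assumes "a > 0" "b > 0" "P > 0" "t \<ge> 0" "qA P a b t \<ge> 0"
  shows "Afun P a b \<le> t"
proof (rule ccontr)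
  assume "\<not> ?thesis"
  then have "qA P a b t < qA P a b (Afun P a b)" using assms by (intro qA_strict_mono) auto
  then show False using A_root[OF assms(1-3)] assms by simp
qed

lemma A_ge_of:
  assumes "a > 0" "b > 0" "P > 0" "t \<ge> 0" "qA P a b t \<le> 0"
  shows "t \<le> Afun P a b"
proof (rule ccontr)
  assume "\<not> ?thesis"
  then have "qA P a b (Afun P a b) < qA P a b t"
    using assms A_pos[OF assms(1-3)] by (intro qA_strict_mono) auto
  then show False using A_root[OF assms(1-3)] assms by simp
qed

lemma A_lt1:
  assumes "a > 0" "b > 0" "P > 0"
  shows "Afun P a b \<le> b / (a + b)"
proof (rule A_le_of[OF assms])
  show "0 \<le> b / (a + b)" using assms by simp
  have "(a + b) * (b / (a + b)) = b" using assms by simp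
  then have "qA P a b (b / (a + b)) = P * a * b * (b / (a + b))^2"
    unfolding qA_def by simp
  then show "0 \<le> qA P a b (b / (a + b))" using assms by simp
qed

lemma A_le_half:
  assumes "a > 0" "b > 0" "P > 0" "b \<le> a"
  shows "Afun P a b \<le> 1/2"
proof -
  have "b / (a + b) \<le> 1/2" using assms by (simp add: field_simps)
  then show ?thesis using A_lt1[OF assms(1-3)] by linarith
qed

lemma A_le_sqrt:
  assumes a: "a > 0" and b: "b > 0" and P: "P > 0"
  shows "Afun P a b \<le> 1 / sqrt (a * P)"
proof (rule A_le_of[OF a b P])
  have sp: "sqrt (a * P) > 0" using a P by simp
  have sq: "sqrt (a * P)^2 = a * P" using a P by (simp add: less_imp_le)
  show "0 \<le> 1 / sqrt (a * P)" using sp by simp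
  have "qA P a b (1 / sqrt (a * P)) = P * a * b / (a * P) + (a + b) / sqrt (a * P) - b"
    unfolding qA_def using sp by (simp add: power_divide sq)
  also have "\<dots> = (a + b) / sqrt (a * P)" using a P by simp
  finally show "0 \<le> qA P a b (1 / sqrt (a * P))" using sp a b by simp
qed

lemma A_ge_lin:
  assumes a: "a > 0" and b: "b > 0" and P: "P > 0"
  shows "b / (a + b + b * sqrt (a * P)) \<le> Afun P a b"
proof (rule A_ge_of[OF a b P])
  define r where "r = sqrt (a * P)"
  have r0: "r \<ge> 0" unfolding r_def using a P by simp
  have r2: "r^2 = a * P" unfolding r_def using a P by (simp add: less_imp_le)
  define D where "D = a + b + b * r"
  have D: "D > 0" unfolding D_def using a b r0 by (simp add: add_pos_nonneg)
  have "0 \<le> sqrt (a * P)" using a P by simp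
  then show "0 \<le> b / (a + b + b * sqrt (a * P))" using a b by (intro divide_nonneg_pos) (auto intro: add_pos_nonneg)
  have "qA P a b (b / D) = b * (P * a * b^2 + (a + b) * D - D^2) / D^2"
    unfolding qA_def using D by (simp add: field_simps power2_eq_square)
  also have "P * a * b^2 + (a + b) * D - D^2 = b * r * (b * r - D)"
    unfolding D_def using r2 by (simp add: algebra_simps power2_eq_square)
  finally have "qA P a b (b / D) = b * (b * r * (b * r - D)) / D^2" .
  moreover have "b * r - D \<le> 0" unfolding D_def using a b by simp
  ultimately have "qA P a b (b / D) \<le> 0"
    using b r0 D by (simp add: divide_nonpos_pos mult_nonneg_nonpos)
  then show "qA P a b (b / (a + b + b * sqrt (a * P))) \<le> 0" unfolding D_def r_def .
qed

lemma A_mono_b: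
  assumes a: "a > 0" and b: "b > 0" and P: "P > 0" and bb: "b \<le> b'"
  shows "Afun P a b \<le> Afun P a b'"
proof (rule A_ge_of)
  let ?t = "Afun P a b"
  have r: "qA P a b ?t = 0" by (rule A_root[OF a b P])
  have t0: "?t > 0" by (rule A_pos[OF a b P])
  have e: "qA P a b' ?t = qA P a b ?t + (b' - b) * (P * a * ?t^2 + ?t - 1)"
    unfolding qA_def by (simp add: algebra_simps)
  have "b * (P * a * ?t^2 + ?t - 1) = - a * ?t"
    using r unfolding qA_def by (simp add: algebra_simps)
  then have "b * (P * a * ?t^2 + ?t - 1) < 0" using a t0 by simp
  then have n: "P * a * ?t^2 + ?t - 1 < 0" using b by (simp add: mult_less_0_iff)
  show "qA P a b' ?t \<le> 0" unfolding e r using n bb by (simp add: mult_nonneg_nonpos)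
qed (use assms A_pos[OF a b P] in auto)

lemma A_anti_a:
  assumes a: "a > 0" and b: "b > 0" and P: "P > 0" and aa: "a \<le> a'"
  shows "Afun P a' b \<le> Afun P a b"
proof (rule A_le_of)
  let ?t = "Afun P a b"
  have r: "qA P a b ?t = 0" by (rule A_root[OF a b P])
  have t0: "?t > 0" by (rule A_pos[OF a b P])
  have e: "qA P a' b ?t = qA P a b ?t + (a' - a) * (P * b * ?t^2 + ?t)"
    unfolding qA_def by (simp add: algebra_simps)
  show "qA P a' b ?t \<ge> 0" unfolding e r using aa t0 b P by (simp add: mult_nonneg_nonneg)
qed (use assms A_pos[OF a b P] in auto)

lemma A_scale_a:
  assumes x: "x > 0" and y: "y > 0" and P: "P > 0" and xa: "x \<le> as"
  shows "Afun P x y * x \<le> Afun P as y * as"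
proof -
  let ?t = "Afun P x y"
  have as: "as > 0" using x xa by simp
  have r: "qA P x y ?t = 0" by (rule A_root[OF x y P])
  have t0: "?t > 0" by (rule A_pos[OF x y P])
  have "?t * x / as \<le> Afun P as y"
  proof (rule A_ge_of[OF as y P])
    show "0 \<le> ?t * x / as" using t0 x as by simp
    have "qA P as y (?t * x / as) - (x / as - 1) * (P * x * y * ?t^2 + y * ?t) = qA P x y ?t"
      using as unfolding qA_def by (simp add: field_simps power2_eq_square)
    then have "qA P as y (?t * x / as) = (x / as - 1) * (P * x * y * ?t^2 + y * ?t)" using r by simp
    moreover have "x / as - 1 \<le> 0" using xa as by simp
    moreover have "P * x * y * ?t^2 + y * ?t \<ge> 0" using P x y t0 by simp
    ultimately show "qA P as y (?t * x / as) \<le> 0" by (simp add: mult_nonpos_nonneg)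
  qed
  then show ?thesis using as by (simp add: field_simps)
qed

lemma A_scale_b:
  assumes x: "x > 0" and y: "y > 0" and P: "P > 0" and ya: "y \<le> aw"
  shows "Afun P x aw * y \<le> Afun P x y * aw"
proof -
  let ?t = "Afun P x y"
  have aw: "aw > 0" using y ya by simp
  have r: "qA P x y ?t = 0" by (rule A_root[OF x y P])
  have t0: "?t > 0" by (rule A_pos[OF x y P])
  define s where "s = aw / y"
  have s1: "s \<ge> 1" unfolding s_def using y ya by simp
  have aws: "aw = y * s" unfolding s_def using y by simp
  have "Afun P x aw \<le> ?t * s"
  proof (rule A_le_of[OF x aw P])
    show "0 \<le> ?t * s" using t0 s1 by simp
    have "qA P x aw (?t * s) = s * (qA P x y ?t + P * x * y * ?t^2 * (s^2 - 1) + y * ?t * (s - 1))"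
      unfolding qA_def aws by (simp add: algebra_simps power2_eq_square)
    moreover have "P * x * y * ?t^2 * (s^2 - 1) \<ge> 0"
      using P x y s1 by (intro mult_nonneg_nonneg) (auto simp: one_le_power)
    moreover have "y * ?t * (s - 1) \<ge> 0" using y t0 s1 by simp
    ultimately show "0 \<le> qA P x aw (?t * s)" using r s1 by simp
  qed
  then show ?thesis unfolding s_def using y by (simp add: field_simps)
qed

lemma qo_facts:
  assumes D: "\<Delta> > 0" and h: "h > 0" and TM: "T * \<Delta> = M" and M: "M \<ge> 0"
  shows "\<Delta> \<le> qo \<Delta> T h" "qo \<Delta> T h < h + \<Delta>" "qo \<Delta> T h \<le> M + \<Delta>"
    "h \<le> M \<Longrightarrow> h \<le> qo \<Delta> T h" "M < h \<Longrightarrow> qo \<Delta> T h = M + \<Delta>"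
proof -
  have T1: "(T + 1) * \<Delta> = M + \<Delta>" using TM by (simp add: algebra_simps)
  have c1: "h / \<Delta> \<le> of_int \<lceil>h / \<Delta>\<rceil>" by (rule le_of_int_ceiling)
  have c2: "of_int \<lceil>h / \<Delta>\<rceil> < h / \<Delta> + 1" using ceiling_correct[of "h / \<Delta>"] by linarith
  have c3: "of_int \<lceil>h / \<Delta>\<rceil> \<ge> (1::real)" using h D by simp
  have i1: "h \<le> of_int \<lceil>h / \<Delta>\<rceil> * \<Delta>" using mult_right_mono[OF c1, of \<Delta>] D by simp
  have i2: "of_int \<lceil>h / \<Delta>\<rceil> * \<Delta> < h + \<Delta>" using c2 D by (simp add: field_simps)
  have i3: "\<Delta> \<le> of_int \<lceil>h / \<Delta>\<rceil> * \<Delta>" using c3 D by simp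
  have hM: "h \<le> T * \<Delta> \<longleftrightarrow> h \<le> M" using TM by simp
  show "\<Delta> \<le> qo \<Delta> T h" unfolding qo_def using i3 T1 M by auto
  show "qo \<Delta> T h < h + \<Delta>" unfolding qo_def using i2 T1 TM by auto
  show "qo \<Delta> T h \<le> M + \<Delta>" unfolding qo_def using i2 T1 TM by auto
  show "h \<le> M \<Longrightarrow> h \<le> qo \<Delta> T h" unfolding qo_def using i1 TM by auto
  show "M < h \<Longrightarrow> qo \<Delta> T h = M + \<Delta>" unfolding qo_def using T1 TM by auto
qed

lemma u_id:
  assumes x: "x > 0" and y: "y > 0" and P: "P > 0"
  shows "P * y * (1 - Afun P x y * (1 + P * x * Afun P x y)) = P * x * Afun P x y"
    and "(P * x * Afun P x y) * (P * x * Afun P x y + 1) * y + (P * x * Afun P x y) * x = P * x * y"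
proof -
  let ?a = "Afun P x y"
  have r: "P * x * y * ?a^2 + (x + y) * ?a - y = 0" using A_root[OF x y P] unfolding qA_def .
  have "P * y * (1 - ?a * (1 + P * x * ?a)) - P * x * ?a = - P * (P * x * y * ?a^2 + (x + y) * ?a - y)"
    by (simp add: algebra_simps power2_eq_square)
  then show "P * y * (1 - ?a * (1 + P * x * ?a)) = P * x * ?a" using r by simp
  have "(P * x * ?a) * (P * x * ?a + 1) * y + (P * x * ?a) * x - P * x * y = P * x * (P * x * y * ?a^2 + (x + y) * ?a - y)"
    by (simp add: algebra_simps power2_eq_square)
  then show "(P * x * ?a) * (P * x * ?a + 1) * y + (P * x * ?a) * x = P * x * y" using r by simp
qed

lemma inner_core:
  assumes P: "P > 0" and g: "\<gamma> > 0" and D: "\<Delta> > 0" and y: "y > 0" and yx: "y \<le> x"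
    and xa: "x \<le> as" and ax: "as < x + \<Delta>" and ya: "y \<le> aw" and ay: "aw < y + \<Delta>"
    and u: "u = P * x * Afun P x y" and gu: "\<gamma> \<le> u"
    and fail: "P * Afun P as aw * x < \<gamma> \<or> P * y * (1 - Afun P as aw * (1 + \<gamma>)) < \<gamma>"
  shows "(u - \<gamma>) * x < (1 + \<gamma>) * u * \<Delta>"
proof -
  have x: "x > 0" using y yx by simp
  have as: "as > 0" using x xa by simp
  have aw: "aw > 0" using y ya by simp
  let ?a = "Afun P x y"
  let ?b = "Afun P as aw"
  have a0: "?a > 0" by (rule A_pos[OF x y P])
  have lo: "?a * x \<le> ?b * as"
  proof -
    have "?a * x \<le> Afun P as y * as" by (rule A_scale_a[OF x y P xa])
    also have "\<dots> \<le> ?b * as" using A_mono_b[OF as y P ya] as by simp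
    finally show ?thesis .
  qed
  have hi: "?b * y \<le> ?a * aw"
  proof -
    have "?b \<le> Afun P x aw" by (rule A_anti_a[OF x aw P xa])
    then have "?b * y \<le> Afun P x aw * y" using y by simp
    also have "\<dots> \<le> ?a * aw" by (rule A_scale_b[OF x y P ya])
    finally show ?thesis .
  qed
  from fail show ?thesis
  proof
    assume f: "P * ?b * x < \<gamma>"
    have "u * x = P * x * (?a * x)" using u by simp
    also have "\<dots> \<le> P * x * (?b * as)" using lo P x by simp
    also have "\<dots> = (P * ?b * x) * as" by simp
    also have "\<dots> < \<gamma> * as" using f as by simp
    also have "\<dots> < \<gamma> * (x + \<Delta>)" using ax g by simp
    finally have "u * x < \<gamma> * (x + \<Delta>)" .
    then have "(u - \<gamma>) * x < \<gamma> * \<Delta>" by (simp add: algebra_simps)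
    also have "\<gamma> * \<Delta> \<le> (1 + \<gamma>) * u * \<Delta>"
    proof -
      have "\<gamma> \<le> (1 + \<gamma>) * u" using gu g by (simp add: algebra_simps add_increasing2)
      then show ?thesis using D by simp
    qed
    finally show ?thesis .
  next
    assume f: "P * y * (1 - ?b * (1 + \<gamma>)) < \<gamma>"
    have idt: "P * y * (1 - ?a * (1 + u)) = u" using u_id(1)[OF x y P] u by simp
    have "P * y * ?b * (1 + \<gamma>) = (P * (1 + \<gamma>)) * (?b * y)" by (simp add: algebra_simps)
    also have "\<dots> \<le> (P * (1 + \<gamma>)) * (?a * aw)" using hi P g by (intro mult_left_mono) auto
    also have "\<dots> = P * ?a * aw * (1 + \<gamma>)" by (simp add: algebra_simps)
    also have "\<dots> < P * ?a * (y + \<Delta>) * (1 + \<gamma>)"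
      using ay P a0 g by simp
    finally have "P * y * ?b * (1 + \<gamma>) < P * ?a * (y + \<Delta>) * (1 + \<gamma>)" .
    with f have "P * y - P * ?a * (y + \<Delta>) * (1 + \<gamma>) < \<gamma>" by (simp add: algebra_simps)
    with idt have "(u - \<gamma>) * (1 + P * ?a * y) < P * ?a * \<Delta> * (1 + \<gamma>)" by (simp add: algebra_simps)
    moreover have "(u - \<gamma>) \<le> (u - \<gamma>) * (1 + P * ?a * y)"
    proof -
      have "0 \<le> (u - \<gamma>) * (P * ?a * y)" using gu P a0 y by (intro mult_nonneg_nonneg) auto
      then show ?thesis by (simp add: algebra_simps)
    qed
    ultimately have "(u - \<gamma>) < P * ?a * \<Delta> * (1 + \<gamma>)" by linarith
    then have "(u - \<gamma>) * x < P * ?a * \<Delta> * (1 + \<gamma>) * x" using x by simp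
    also have "\<dots> = (1 + \<gamma>) * u * \<Delta>" using u by simp
    finally show ?thesis .
  qed
qed


lemma band_core:
  assumes P: "P > 0" and g: "\<gamma> > 0" and D: "\<Delta> > 0" and y: "y > 0" and yx: "y \<le> x"
    and u: "u = P * x * Afun P x y" and gu: "\<gamma> \<le> u"
    and key: "(u - \<gamma>) * x < (1 + \<gamma>) * u * \<Delta>" and big: "2 * (1 + \<gamma>) * \<Delta> \<le> x"
  shows "\<gamma> * (\<gamma> + 1) < P * x" "\<gamma> * x / (P * x - \<gamma> * (\<gamma> + 1)) \<le> y"
    "y \<le> \<gamma> * x / (P * x - \<gamma> * (\<gamma> + 1)) + 6 * (1 + \<gamma>) * (\<gamma> + 2) * \<Delta>"
proof -
  have x: "x > 0" using y yx by simp
  define c1 where "c1 = \<gamma> * (\<gamma> + 1)"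
  have G: "u * (u + 1) * y + u * x = P * x * y" using u_id(2)[OF x y P] u by simp
  have u0: "u > 0" using g gu by simp
  have "c1 \<le> u * (u + 1)" unfolding c1_def using g gu by (intro mult_mono) auto
  then have "c1 * y \<le> u * (u + 1) * y" using y by (simp add: mult_right_mono)
  moreover have "\<gamma> * x \<le> u * x" using gu x by simp
  ultimately have low: "c1 * y + \<gamma> * x \<le> P * x * y" using G by linarith
  then have low2: "\<gamma> * x \<le> y * (P * x - c1)" by (simp add: algebra_simps)
  have gx: "\<gamma> * x > 0" using g x by simp
  have pos: "P * x - c1 > 0"
  proof (rule ccontr)
    assume "\<not> ?thesis"
    then have "y * (P * x - c1) \<le> 0" using y by (simp add: mult_nonneg_nonpos)
    then show False using low2 gx by linarith
  qed
  have "y * (P * x - c1) \<le> x * (P * x - c1)" using yx pos by (simp add: mult_right_mono)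
  then have "\<gamma> * x \<le> x * (P * x - c1)" using low2 by linarith
  then have "x * \<gamma> \<le> x * (P * x - c1)" by (simp add: mult.commute)
  then have gam: "\<gamma> \<le> P * x - c1" using x by (simp add: mult_le_cancel_left_pos)
  show "\<gamma> * (\<gamma> + 1) < P * x" using pos unfolding c1_def by simp
  show "\<gamma> * x / (P * x - \<gamma> * (\<gamma> + 1)) \<le> y"
    using low2 pos unfolding c1_def[symmetric] by (simp add: divide_le_eq mult.commute)
  define t where "t = (1 + \<gamma>) * \<Delta>"
  have t0: "t > 0" unfolding t_def using g D by simp
  have xt: "2 * t \<le> x" unfolding t_def using big by (simp add: algebra_simps)
  define e where "e = 2 * t / x"
  have e0: "e > 0" unfolding e_def using t0 x by simp
  have e1: "e \<le> 1" unfolding e_def using xt x by simp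
  define v where "v = \<gamma> * (1 + e)"
  have "u * (x - t) < \<gamma> * x" using key unfolding t_def by (simp add: algebra_simps)
  also have "\<gamma> * x \<le> v * (x - t)"
  proof -
    have "v * (x - t) = \<gamma> * ((x + 2 * t) * (x - t) / x)" unfolding v_def e_def using x
      by (simp add: field_simps)
    moreover have "(x + 2 * t) * (x - t) / x \<ge> x"
    proof -
      have "(x + 2 * t) * (x - t) = x * x + t * (x - 2 * t)" by (simp add: algebra_simps)
      moreover have "t * (x - 2 * t) \<ge> 0" using t0 xt by simp
      ultimately have "(x + 2 * t) * (x - t) \<ge> x * x" by linarith
      then show ?thesis using x by (simp add: le_divide_eq)
    qed
    ultimately show ?thesis using mult_left_mono[of x "(x + 2 * t) * (x - t) / x" \<gamma>] g by simp
  qed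
  finally have "u * (x - t) < v * (x - t)" .
  moreover have "x - t > 0" using xt t0 by simp
  ultimately have uv: "u < v" by simp
  have v0: "v > 0" unfolding v_def using g e0 by simp
  have "P * x * y = u * (u + 1) * y + u * x" using G by simp
  also have "\<dots> < v * (v + 1) * y + v * x"
  proof -
    have "u * (u + 1) < v * (v + 1)" using uv u0 by (intro mult_strict_mono) auto
    then have "u * (u + 1) * y < v * (v + 1) * y" using y by simp
    moreover have "u * x < v * x" using uv x by simp
    ultimately show ?thesis by simp
  qed
  also have "\<dots> \<le> (1 + e)^2 * (c1 * y + \<gamma> * x)"
  proof -
    have "v * (v + 1) \<le> (1 + e)^2 * c1"
    proof -
      have "v + 1 \<le> (1 + e) * (\<gamma> + 1)" unfolding v_def using e0 by (simp add: algebra_simps)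
      then have "v * (v + 1) \<le> v * ((1 + e) * (\<gamma> + 1))" using v0 by simp
      also have "\<dots> = (1 + e)^2 * c1" unfolding v_def c1_def by (simp add: algebra_simps power2_eq_square)
      finally show ?thesis .
    qed
    then have A1: "v * (v + 1) * y \<le> (1 + e)^2 * c1 * y" using y by (simp add: mult_right_mono)
    have "v \<le> (1 + e)^2 * \<gamma>" unfolding v_def using e0 g
      by (simp add: power2_eq_square algebra_simps)
    then have A2: "v * x \<le> (1 + e)^2 * \<gamma> * x" using x by (simp add: mult_right_mono)
    show ?thesis using A1 A2 by (simp add: algebra_simps)
  qed
  also have "\<dots> \<le> (1 + 3 * e) * (c1 * y + \<gamma> * x)"
  proof -
    have "(1 + e)^2 \<le> 1 + 3 * e" using e0 e1 by (simp add: power2_eq_square algebra_simps)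
    moreover have "c1 * y + \<gamma> * x \<ge> 0" unfolding c1_def using g x y by simp
    ultimately show ?thesis by (simp add: mult_right_mono)
  qed
  also have "\<dots> \<le> c1 * y + \<gamma> * x + 6 * (1 + \<gamma>) * \<Delta> * (c1 + \<gamma>)"
  proof -
    have "3 * e * (c1 * y + \<gamma> * x) = 6 * (1 + \<gamma>) * \<Delta> * (c1 * (y / x) + \<gamma>)"
      unfolding e_def t_def using x by (simp add: field_simps)
    also have "\<dots> \<le> 6 * (1 + \<gamma>) * \<Delta> * (c1 + \<gamma>)"
    proof -
      have "y / x \<le> 1" using yx x by simp
      moreover have "c1 \<ge> 0" unfolding c1_def using g by simp
      ultimately have "c1 * (y / x) \<le> c1 * 1" by (intro mult_left_mono) auto
      then have "c1 * (y / x) \<le> c1" by simp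
      then show ?thesis using g D by (simp add: mult_left_mono)
    qed
    finally show ?thesis by (simp add: algebra_simps)
  qed
  finally have "y * (P * x - c1) < \<gamma> * x + 6 * (1 + \<gamma>) * \<Delta> * (c1 + \<gamma>)" by (simp add: algebra_simps)
  then have "y < (\<gamma> * x + 6 * (1 + \<gamma>) * \<Delta> * (c1 + \<gamma>)) / (P * x - c1)"
    using pos by (simp add: less_divide_eq)
  also have "\<dots> = \<gamma> * x / (P * x - c1) + 6 * (1 + \<gamma>) * \<Delta> * (c1 + \<gamma>) / (P * x - c1)"
    by (simp add: add_divide_distrib)
  also have "6 * (1 + \<gamma>) * \<Delta> * (c1 + \<gamma>) / (P * x - c1) \<le> 6 * (1 + \<gamma>) * \<Delta> * (c1 + \<gamma>) / \<gamma>"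
    using gam g D unfolding c1_def by (intro divide_left_mono) auto
  also have "6 * (1 + \<gamma>) * \<Delta> * (c1 + \<gamma>) / \<gamma> = 6 * (1 + \<gamma>) * (\<gamma> + 2) * \<Delta>"
    unfolding c1_def using g by (simp add: field_simps power2_eq_square)
  finally show "y \<le> \<gamma> * x / (P * x - \<gamma> * (\<gamma> + 1)) + 6 * (1 + \<gamma>) * (\<gamma> + 2) * \<Delta>"
    unfolding c1_def by simp
qed


lemma free_core:
  assumes P: "P > 0" and g: "\<gamma> > 0" and D: "\<Delta> > 0" and x: "x > 0" and y: "y > 0"
    and ax: "as < x + \<Delta>" and aw: "aw > 0" and awas: "aw \<le> as" and asr: "as \<le> aw * (1 + x / y)"
    and inn: "x \<le> M \<Longrightarrow> x \<le> as" and ov: "M < x \<Longrightarrow> as = M + \<Delta>"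
    and fail: "P * Afun P as aw * x < \<gamma> \<or> P * y * (1 - Afun P as aw * (1 + \<gamma>)) < \<gamma>"
  shows "P * x \<le> 9 * \<gamma> + 3 * \<gamma> * sqrt (\<Delta> * P) + 9 * \<gamma>^2 + 4 * (1 + \<gamma>)^2
       \<or> P * y \<le> 9 * \<gamma> + 3 * \<gamma> * sqrt (\<Delta> * P) + 9 * \<gamma>^2 + 4 * (1 + \<gamma>)^2
       \<or> P * (M + \<Delta>) < 4 * (1 + \<gamma>)^2"
proof -
  let ?R = "9 * \<gamma> + 3 * \<gamma> * sqrt (\<Delta> * P) + 9 * \<gamma>^2 + 4 * (1 + \<gamma>)^2"
  have as: "as > 0" using aw awas by simp
  let ?b = "Afun P as aw"
  have b0: "?b > 0" by (rule A_pos[OF as aw P])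
  have sq0: "sqrt (\<Delta> * P) \<ge> 0" using D P by simp
  have sqx0: "sqrt (x * P) \<ge> 0" using x P by simp
  have R1: "3 * \<gamma> * (2 + sqrt (\<Delta> * P)) \<le> ?R" using g sq0 by (simp add: algebra_simps)
  have R2: "3 * \<gamma> \<le> ?R" using g sq0 by simp
  have R3: "9 * \<gamma>^2 \<le> ?R" using g sq0 by simp
  have R4: "4 * (1 + \<gamma>)^2 \<le> ?R" using g sq0 by simp
  from fail show ?thesis
  proof
    assume f: "P * ?b * x < \<gamma>"
    define Dn where "Dn = as + aw + aw * sqrt (as * P)"
    have sqa0: "sqrt (as * P) \<ge> 0" using as P by simp
    have Dn0: "Dn > 0" unfolding Dn_def using as aw sqa0 by (simp add: add_pos_nonneg)
    have "aw / Dn \<le> ?b" unfolding Dn_def by (rule A_ge_lin[OF as aw P])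
    then have "P * x * (aw / Dn) \<le> P * x * ?b" using P x by (intro mult_left_mono) auto
    then have "P * x * aw / Dn < \<gamma>" using f by (simp add: mult.commute mult.left_commute)
    then have "P * x * aw < \<gamma> * Dn" using Dn0 by (simp add: divide_less_eq)
    also have "\<gamma> * Dn \<le> \<gamma> * (aw * (2 + x / y + sqrt (as * P)))"
    proof -
      have "Dn \<le> aw * (1 + x / y) + aw + aw * sqrt (as * P)" unfolding Dn_def using asr by simp
      also have "\<dots> = aw * (2 + x / y + sqrt (as * P))" by (simp add: algebra_simps)
      finally show ?thesis using g by simp
    qed
    finally have "aw * (P * x) < aw * (\<gamma> * (2 + x / y + sqrt (as * P)))" by (simp add: algebra_simps)
    then have c: "P * x < \<gamma> * (2 + x / y + sqrt (as * P))" using aw by simp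
    have "sqrt (as * P) \<le> sqrt (x * P + \<Delta> * P)"
    proof (intro real_sqrt_le_mono)
      have "as * P \<le> (x + \<Delta>) * P" using ax P by (intro mult_right_mono) auto
      then show "as * P \<le> x * P + \<Delta> * P" by (simp add: algebra_simps)
    qed
    also have "\<dots> \<le> sqrt (x * P) + sqrt (\<Delta> * P)"
      using x D P by (intro sqrt_add_le_add_sqrt) auto
    finally have "\<gamma> * (2 + x / y + sqrt (as * P)) \<le> \<gamma> * (2 + x / y + (sqrt (x * P) + sqrt (\<Delta> * P)))"
      using g by simp
    with c have c2: "P * x < \<gamma> * (2 + sqrt (\<Delta> * P)) + \<gamma> * (x / y) + \<gamma> * sqrt (x * P)"
      by (simp add: algebra_simps)
    show ?thesis
    proof (cases "P * x \<le> 3 * \<gamma> * (2 + sqrt (\<Delta> * P))")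
      case True then show ?thesis using R1 by auto
    next
      case F1: False
      show ?thesis
      proof (cases "P * x \<le> 3 * (\<gamma> * (x / y))")
        case True
        then have "P * x \<le> 3 * \<gamma> * x / y" by simp
        then have "P * x * y \<le> 3 * \<gamma> * x" using y by (simp add: le_divide_eq)
        then have "x * (P * y) \<le> x * (3 * \<gamma>)" by (simp add: algebra_simps)
        then have "P * y \<le> 3 * \<gamma>" using x by (simp add: mult_le_cancel_left_pos)
        then show ?thesis using R2 by auto
      next
        case F2: False
        have "P * x \<le> 3 * (\<gamma> * sqrt (x * P))" using c2 F1 F2 by linarith
        then have h: "x * P \<le> 3 * \<gamma> * sqrt (x * P)" by (simp add: algebra_simps)
        define sx where "sx = sqrt (x * P)"
        have sxp: "sx > 0" unfolding sx_def using x P by simp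
        have sxx: "sx * sx = x * P" unfolding sx_def using x P by (simp add: less_imp_le)
        have "sx * sx \<le> (3 * \<gamma>) * sx" using h unfolding sxx by (simp add: sx_def)
        then have "sx \<le> 3 * \<gamma>" using sxp by (simp add: mult_le_cancel_right_pos)
        then have "sqrt (x * P) \<le> 3 * \<gamma>" unfolding sx_def .
        then have "sqrt (x * P) * sqrt (x * P) \<le> (3 * \<gamma>) * (3 * \<gamma>)"
          using sqx0 g by (intro mult_mono) auto
        then have "x * P \<le> 9 * \<gamma>^2" using x P by (simp add: power2_eq_square less_imp_le)
        then show ?thesis using R3 by (auto simp: mult.commute)
      qed
    qed
  next
    assume f: "P * y * (1 - ?b * (1 + \<gamma>)) < \<gamma>"
    show ?thesis
    proof (cases "?b * (1 + \<gamma>) \<le> 1/2")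
      case True
      then have "P * y * (1/2) \<le> P * y * (1 - ?b * (1 + \<gamma>))" using P y by (intro mult_left_mono) auto
      then have "P * y < 2 * \<gamma>" using f by simp
      then show ?thesis using R2 g by auto
    next
      case False
      have sa: "sqrt (as * P) > 0" using as P by simp
      have "?b \<le> 1 / sqrt (as * P)" by (rule A_le_sqrt[OF as aw P])
      then have "?b * (1 + \<gamma>) \<le> (1 / sqrt (as * P)) * (1 + \<gamma>)" using g by (intro mult_right_mono) auto
      moreover have "1/2 < ?b * (1 + \<gamma>)" using False by simp
      ultimately have "1/2 < (1 / sqrt (as * P)) * (1 + \<gamma>)" by linarith
      then have "1/2 < (1 + \<gamma>) / sqrt (as * P)" by simp
      then have "sqrt (as * P) < 2 * (1 + \<gamma>)" using sa by (simp add: field_simps)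
      then have "sqrt (as * P) * sqrt (as * P) < (2 * (1 + \<gamma>)) * (2 * (1 + \<gamma>))"
        using sa g by (intro mult_strict_mono) auto
      moreover have "(2 * (1 + \<gamma>)) * (2 * (1 + \<gamma>)) = 4 * (1 + \<gamma>)^2" by (simp add: power2_eq_square algebra_simps)
      ultimately have asP: "as * P < 4 * (1 + \<gamma>)^2" using as P by (simp add: less_imp_le)
      show ?thesis
      proof (cases "x \<le> M")
        case True
        then have "P * x \<le> P * as" using inn P by simp
        then show ?thesis using asP R4 by (auto simp: mult.commute)
      next
        case False
        then have "as = M + \<Delta>" using ov by simp
        then show ?thesis using asP by (auto simp: mult.commute)
      qed
    qed
  qed
qed

lemma rmax_sym: "rmax P x y = rmax P y x"
  unfolding rmax_def by auto

lemma rmax_ge: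
  assumes P: "P > 0" and x: "x > 0" and y: "y > 0" and yx: "y \<le> x"
    and r: "\<not> rmax P x y < rth" and g: "\<gamma> = 2 powr rth - 1"
  shows "\<gamma> \<le> P * x * Afun P x y"
proof -
  have a: "Afun P x y > 0" by (rule A_pos[OF x y P])
  have "rmax P x y = log 2 (1 + P * x * Afun P x y)" unfolding rmax_def using yx by simp
  then have "rth \<le> log 2 (1 + P * x * Afun P x y)" using r by simp
  moreover have "0 < 1 + P * x * Afun P x y" using P x a by (intro add_pos_pos) auto
  ultimately have "2 powr rth \<le> 1 + P * x * Afun P x y" by (subst (asm) le_log_iff) auto
  then show ?thesis using g by simp
qed

lemma fail_conv:
  assumes P: "P > 0" and x: "x > 0" and y: "y > 0" and as: "as > 0" and aw: "aw > 0"
    and g: "\<gamma> = 2 powr rth - 1"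
    and f: "min (log 2 (1 + P * Afun P as aw * x)) (log 2 (1 + P * y * (1 - Afun P as aw) / (P * y * Afun P as aw + 1))) < rth"
  shows "P * Afun P as aw * x < \<gamma> \<or> P * y * (1 - Afun P as aw * (1 + \<gamma>)) < \<gamma>"
proof -
  let ?a = "Afun P as aw"
  have a0: "?a > 0" by (rule A_pos[OF as aw P])
  have a1: "?a \<le> aw / (as + aw)" by (rule A_lt1[OF as aw P])
  have "aw / (as + aw) < 1" using as aw by simp
  then have a1': "?a < 1" using a1 by simp
  have d: "P * y * ?a + 1 > 0" using P y a0 by (simp add: add_pos_pos)
  from f show ?thesis
  proof (cases "log 2 (1 + P * ?a * x) < rth")
    case True
    moreover have "0 < 1 + P * ?a * x" using P x a0 by (intro add_pos_pos) auto
    ultimately have "1 + P * ?a * x < 2 powr rth" by (subst (asm) log_less_iff) auto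
    then show ?thesis using g by simp
  next
    case False
    with f have L: "log 2 (1 + P * y * (1 - ?a) / (P * y * ?a + 1)) < rth" by (simp add: min_def split: if_splits)
    have nn: "P * y * (1 - ?a) / (P * y * ?a + 1) \<ge> 0" using P y a1' d by simp
    have "1 + P * y * (1 - ?a) / (P * y * ?a + 1) < 2 powr rth"
      using L nn by (subst (asm) log_less_iff) auto
    then have "P * y * (1 - ?a) / (P * y * ?a + 1) < \<gamma>" using g by simp
    then have "P * y * (1 - ?a) < \<gamma> * (P * y * ?a + 1)" using d by (simp add: divide_less_eq)
    then show ?thesis by (simp add: algebra_simps)
  qed
qed


definition gfun :: "real \<Rightarrow> real \<Rightarrow> real \<Rightarrow> real" where
  "gfun P \<gamma> x = \<gamma> * x / (P * x - \<gamma> * (\<gamma> + 1))"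

definition bandp :: "real \<Rightarrow> real \<Rightarrow> real \<Rightarrow> real \<Rightarrow> real \<Rightarrow> bool" where
  "bandp P \<gamma> \<Delta> x y = (\<gamma> * (\<gamma> + 1) < P * x \<and> gfun P \<gamma> x \<le> y \<and> y \<le> gfun P \<gamma> x + 6 * (1 + \<gamma>) * (\<gamma> + 2) * \<Delta>)"

definition Rf :: "real \<Rightarrow> real \<Rightarrow> real \<Rightarrow> real" where
  "Rf P \<Delta> \<gamma> = 9 * \<gamma> + 3 * \<gamma> * sqrt (\<Delta> * P) + 9 * \<gamma>^2 + 4 * (1 + \<gamma>)^2"

lemma E_help:
  assumes P: "P > 0" and y: "y > 0" and yx: "y \<le> x" and gu: "\<gamma> \<le> P * x * Afun P x y" and g: "\<gamma> > 0"
  shows "\<gamma> \<le> P * y"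
proof -
  have x: "x > 0" using y yx by simp
  let ?u = "P * x * Afun P x y"
  have G: "?u * (?u + 1) * y + ?u * x = P * x * y" by (rule u_id(2)[OF x y P])
  have u0: "?u > 0" using gu g by simp
  have "?u * (?u + 1) * y \<ge> 0" using u0 y by simp
  then have "?u * x \<le> P * x * y" using G by linarith
  then have "x * ?u \<le> x * (P * y)" by (simp add: algebra_simps)
  then have "?u \<le> P * y" using x by (simp add: mult_le_cancel_left_pos)
  then show ?thesis using gu by simp
qed

lemma pt_gen:
  assumes P: "P > 0" and rth: "rth > 0" and D: "\<Delta> > 0" and TM: "T * \<Delta> = M" and M: "M \<ge> 0"
    and x: "x > 0" and y: "y > 0" and asd: "as = qo \<Delta> T x" and awd: "aw = qo \<Delta> T y" and awas: "aw \<le> as"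
    and g: "\<gamma> = 2 powr rth - 1"
    and f: "min (log 2 (1 + P * Afun P as aw * x)) (log 2 (1 + P * y * (1 - Afun P as aw) / (P * y * Afun P as aw + 1))) < rth"
    and r: "\<not> rmax P x y < rth"
  shows "\<gamma> \<le> P * x \<and> \<gamma> \<le> P * y"
    and "P * x \<le> Rf P \<Delta> \<gamma> \<or> P * y \<le> Rf P \<Delta> \<gamma> \<or> P * (M + \<Delta>) < 4 * (1 + \<gamma>)^2"
    and "M < x \<or> M < y \<or> \<bar>x - y\<bar> < \<Delta> \<or> x < 2 * (1 + \<gamma>) * \<Delta> \<or> y < 2 * (1 + \<gamma>) * \<Delta>
         \<or> bandp P \<gamma> \<Delta> x y \<or> bandp P \<gamma> \<Delta> y x"
proof -
  have g0: "\<gamma> > 0" using g rth by simp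
  note qx = qo_facts[OF D x TM M] and qy = qo_facts[OF D y TM M]
  have as0: "as > 0" using qx(1) D asd by simp
  have aw0: "aw > 0" using qy(1) D awd by simp
  have fail: "P * Afun P as aw * x < \<gamma> \<or> P * y * (1 - Afun P as aw * (1 + \<gamma>)) < \<gamma>"
    by (rule fail_conv[OF P x y as0 aw0 g f])
  show "\<gamma> \<le> P * x \<and> \<gamma> \<le> P * y"
  proof (cases "y \<le> x")
    case True
    have "\<gamma> \<le> P * x * Afun P x y" by (rule rmax_ge[OF P x y True r g])
    then have "\<gamma> \<le> P * y" by (rule E_help[OF P y True _ g0])
    moreover have "P * y \<le> P * x" using True P by simp
    ultimately show ?thesis by simp
  next
    case False
    then have yx: "x \<le> y" by simp
    have r': "\<not> rmax P y x < rth" using r rmax_sym by metis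
    have "\<gamma> \<le> P * y * Afun P y x" by (rule rmax_ge[OF P y x yx r' g])
    then have "\<gamma> \<le> P * x" by (rule E_help[OF P x yx _ g0])
    moreover have "P * x \<le> P * y" using yx P by simp
    ultimately show ?thesis by simp
  qed
  have asr: "as \<le> aw * (1 + x / y)"
  proof (cases "y \<le> M")
    case True
    then have "y \<le> aw" using qy(4) awd by simp
    then have "x \<le> aw * (x / y)" using x y by (simp add: field_simps)
    moreover have "as < x + \<Delta>" using qx(2) asd by simp
    moreover have "\<Delta> \<le> aw" using qy(1) awd by simp
    ultimately show ?thesis by (simp add: algebra_simps)
  next
    case False
    then have "aw = M + \<Delta>" using qy(5) awd by simp
    moreover have "as \<le> M + \<Delta>" using qx(3) asd by simp
    ultimately have "as = aw" using awas by simp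
    moreover have "aw * 1 \<le> aw * (1 + x / y)" using aw0 x y by (intro mult_left_mono) auto
    ultimately show ?thesis by simp
  qed
  show "P * x \<le> Rf P \<Delta> \<gamma> \<or> P * y \<le> Rf P \<Delta> \<gamma> \<or> P * (M + \<Delta>) < 4 * (1 + \<gamma>)^2"
    unfolding Rf_def
  proof (rule free_core[OF P g0 D x y _ aw0 awas asr _ _ fail])
    show "as < x + \<Delta>" using qx(2) asd by simp
    show "x \<le> M \<Longrightarrow> x \<le> as" using qx(4) asd by simp
    show "M < x \<Longrightarrow> as = M + \<Delta>" using qx(5) asd by simp
  qed
  show "M < x \<or> M < y \<or> \<bar>x - y\<bar> < \<Delta> \<or> x < 2 * (1 + \<gamma>) * \<Delta> \<or> y < 2 * (1 + \<gamma>) * \<Delta>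
         \<or> bandp P \<gamma> \<Delta> x y \<or> bandp P \<gamma> \<Delta> y x"
  proof (cases "M < x \<or> M < y")
    case True then show ?thesis by auto
  next
    case False
    then have xM: "x \<le> M" and yM: "y \<le> M" by auto
    have xa: "x \<le> as" using qx(4)[OF xM] asd by simp
    have ax: "as < x + \<Delta>" using qx(2) asd by simp
    have ya: "y \<le> aw" using qy(4)[OF yM] awd by simp
    have ay: "aw < y + \<Delta>" using qy(2) awd by simp
    show ?thesis
    proof (cases "y \<le> x")
      case False
      then have "\<bar>x - y\<bar> < \<Delta>" using ya awas ax by simp
      then show ?thesis by simp
    next
      case yx: True
      define u where "u = P * x * Afun P x y"
      have gu: "\<gamma> \<le> u" unfolding u_def by (rule rmax_ge[OF P x y yx r g])
      have key: "(u - \<gamma>) * x < (1 + \<gamma>) * u * \<Delta>"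
        by (rule inner_core[OF P g0 D y yx xa ax ya ay u_def gu fail])
      show ?thesis
      proof (cases "x < 2 * (1 + \<gamma>) * \<Delta>")
        case True then show ?thesis by simp
      next
        case False
        then have big: "2 * (1 + \<gamma>) * \<Delta> \<le> x" by simp
        note bc = band_core[OF P g0 D y yx u_def gu key big]
        have "bandp P \<gamma> \<Delta> x y" unfolding bandp_def gfun_def using bc by simp
        then show ?thesis by simp
      qed
    qed
  qed
qed


lemma pt:
  assumes P: "P > 0" and rth: "rth > 0" and D: "\<Delta> > 0" and TM: "T * \<Delta> = M" and M: "M \<ge> 0"
    and h1: "h1 > 0" and h2: "h2 > 0" and g: "\<gamma> = 2 powr rth - 1"
    and q: "rq P \<Delta> T h1 h2 < rth" and r: "\<not> rmax P h1 h2 < rth"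
  shows "\<gamma> \<le> P * h1 \<and> \<gamma> \<le> P * h2"
    and "P * h1 \<le> Rf P \<Delta> \<gamma> \<or> P * h2 \<le> Rf P \<Delta> \<gamma> \<or> P * (M + \<Delta>) < 4 * (1 + \<gamma>)^2"
    and "M < h1 \<or> M < h2 \<or> \<bar>h1 - h2\<bar> < \<Delta> \<or> h1 < 2 * (1 + \<gamma>) * \<Delta> \<or> h2 < 2 * (1 + \<gamma>) * \<Delta>
         \<or> bandp P \<gamma> \<Delta> h1 h2 \<or> bandp P \<gamma> \<Delta> h2 h1"
proof -
  define a1 where "a1 = qo \<Delta> T h1"
  define a2 where "a2 = qo \<Delta> T h2"
  have a10: "a1 > 0" using qo_facts(1)[OF D h1 TM M] D unfolding a1_def by simp
  have a20: "a2 > 0" using qo_facts(1)[OF D h2 TM M] D unfolding a2_def by simp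
  have "(\<gamma> \<le> P * h1 \<and> \<gamma> \<le> P * h2)
    \<and> (P * h1 \<le> Rf P \<Delta> \<gamma> \<or> P * h2 \<le> Rf P \<Delta> \<gamma> \<or> P * (M + \<Delta>) < 4 * (1 + \<gamma>)^2)
    \<and> (M < h1 \<or> M < h2 \<or> \<bar>h1 - h2\<bar> < \<Delta> \<or> h1 < 2 * (1 + \<gamma>) * \<Delta> \<or> h2 < 2 * (1 + \<gamma>) * \<Delta>
         \<or> bandp P \<gamma> \<Delta> h1 h2 \<or> bandp P \<gamma> \<Delta> h2 h1)"
  proof (cases "a2 \<le> a1")
    case True
    have al: "alpha_q P \<Delta> T h1 h2 = Afun P a1 a2"
      unfolding alpha_q_def Let_def a1_def[symmetric] a2_def[symmetric] using True a10 a20 by simp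
    have f: "min (log 2 (1 + P * Afun P a1 a2 * h1)) (log 2 (1 + P * h2 * (1 - Afun P a1 a2) / (P * h2 * Afun P a1 a2 + 1))) < rth"
      using q unfolding rq_def Let_def a1_def[symmetric] a2_def[symmetric] al using True by simp
    note pg = pt_gen[OF P rth D TM M h1 h2 a1_def a2_def True g f r]
    show ?thesis using pg by auto
  next
    case False
    then have T': "a1 \<le> a2" by simp
    have al: "alpha_q P \<Delta> T h1 h2 = Afun P a2 a1"
      unfolding alpha_q_def Let_def a1_def[symmetric] a2_def[symmetric] using False a10 a20 by simp
    have f: "min (log 2 (1 + P * Afun P a2 a1 * h2)) (log 2 (1 + P * h1 * (1 - Afun P a2 a1) / (P * h1 * Afun P a2 a1 + 1))) < rth"
      using q unfolding rq_def Let_def a1_def[symmetric] a2_def[symmetric] al using False by simp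
    have r': "\<not> rmax P h2 h1 < rth" using r rmax_sym by metis
    note pg = pt_gen[OF P rth D TM M h2 h1 a2_def a1_def T' g f r']
    show ?thesis using pg by (auto simp: abs_minus_commute)
  qed
  then show "\<gamma> \<le> P * h1 \<and> \<gamma> \<le> P * h2"
    and "P * h1 \<le> Rf P \<Delta> \<gamma> \<or> P * h2 \<le> Rf P \<Delta> \<gamma> \<or> P * (M + \<Delta>) < 4 * (1 + \<gamma>)^2"
    and "M < h1 \<or> M < h2 \<or> \<bar>h1 - h2\<bar> < \<Delta> \<or> h1 < 2 * (1 + \<gamma>) * \<Delta> \<or> h2 < 2 * (1 + \<gamma>) * \<Delta>
         \<or> bandp P \<gamma> \<Delta> h1 h2 \<or> bandp P \<gamma> \<Delta> h2 h1" by blast+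
qed

lemma min_le_sqrt:
  fixes a b :: real
  assumes "a \<ge> 0" "b \<ge> 0"
  shows "min a b \<le> sqrt (a * b)"
proof -
  have "min a b * min a b \<le> a * b" using assms by (simp add: min_def mult_mono mult_left_mono)
  then have "sqrt (min a b * min a b) \<le> sqrt (a * b)" by (rule real_sqrt_le_mono)
  then show ?thesis using assms by simp
qed

lemma arithB:
  fixes P \<Delta> \<gamma> l2 CD C0 :: real
  assumes P: "P > 0" and D: "\<Delta> > 0" and D1: "\<Delta> \<le> 1" and g: "\<gamma> > 0" and l2: "l2 > 0"
    and CD: "CD \<ge> 0" and C0: "C0 \<ge> 0"
    and r: "r = (C0 + 3 * \<gamma> * sqrt (\<Delta> * P)) / P"
  shows "4 * sqrt \<Delta> * r / l2 + min (CD * \<Delta>) (2 * r / l2)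
     \<le> (4 * (C0 + 3 * \<gamma>) / l2 + sqrt (2 * CD * C0 / l2) + 6 * \<gamma> / l2) * sqrt \<Delta> * (1 + sqrt P) / P"
proof -
  define s where "s = sqrt \<Delta>"
  define q where "q = sqrt P"
  have s0: "s > 0" unfolding s_def using D by simp
  have s1: "s \<le> 1" unfolding s_def using D1 by simp
  have q0: "q > 0" unfolding q_def using P by simp
  have Dq: "\<Delta> = s * s" unfolding s_def using D by simp
  have Pq: "P = q * q" unfolding q_def using P by simp
  have sDP: "sqrt (\<Delta> * P) = s * q" unfolding s_def q_def by (simp add: real_sqrt_mult)
  have r': "r = (C0 + 3 * \<gamma> * s * q) / (q * q)" using r sDP Pq by simp
  have t1: "4 * sqrt \<Delta> * r / l2 \<le> 4 * (C0 + 3 * \<gamma>) / l2 * s * (1 + q) / (q * q)"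
  proof -
    have "C0 + 3 * \<gamma> * s * q \<le> (C0 + 3 * \<gamma>) * (1 + q)"
    proof -
      have a: "3 * \<gamma> * s * q \<le> 3 * \<gamma> * 1 * q" using s1 g q0 by (intro mult_right_mono mult_left_mono) auto
      have b: "0 \<le> C0 * q" using C0 q0 by simp
      have c: "(C0 + 3 * \<gamma>) * (1 + q) = C0 + C0 * q + 3 * \<gamma> + 3 * \<gamma> * q" by (simp add: algebra_simps)
      show ?thesis using a b c g by linarith
    qed
    then have "4 * s * (C0 + 3 * \<gamma> * s * q) \<le> 4 * s * ((C0 + 3 * \<gamma>) * (1 + q))"
      using s0 by (intro mult_left_mono) auto
    then have "4 * s * (C0 + 3 * \<gamma> * s * q) / (l2 * (q * q)) \<le> 4 * s * ((C0 + 3 * \<gamma>) * (1 + q)) / (l2 * (q * q))"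
      using l2 q0 by (intro divide_right_mono) auto
    then show ?thesis unfolding r' s_def[symmetric] by (simp add: field_simps)
  qed
  have t2: "min (CD * \<Delta>) (2 * r / l2) \<le> min (CD * \<Delta>) (2 * C0 / (l2 * P)) + 6 * \<gamma> * s * q / (l2 * P)"
  proof -
    have "2 * r / l2 = (2 * C0 + 6 * \<gamma> * s * q) / (l2 * P)"
      unfolding r sDP by (simp add: field_simps)
    also have "\<dots> = 2 * C0 / (l2 * P) + 6 * \<gamma> * s * q / (l2 * P)" by (rule add_divide_distrib)
    finally have "2 * r / l2 = 2 * C0 / (l2 * P) + 6 * \<gamma> * s * q / (l2 * P)" .
    moreover have "6 * \<gamma> * s * q / (l2 * P) \<ge> 0" using g s0 q0 l2 P by simp
    ultimately show ?thesis by (simp add: min_def)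
  qed
  have t3: "min (CD * \<Delta>) (2 * C0 / (l2 * P)) \<le> sqrt (2 * CD * C0 / l2) * s * (1 + q) / (q * q)"
  proof -
    have "min (CD * \<Delta>) (2 * C0 / (l2 * P)) \<le> sqrt (CD * \<Delta> * (2 * C0 / (l2 * P)))"
      using CD D C0 l2 P by (intro min_le_sqrt) auto
    also have "CD * \<Delta> * (2 * C0 / (l2 * P)) = (2 * CD * C0 / l2) * (s / q)^2"
      unfolding Dq Pq using q0 l2 by (simp add: field_simps power2_eq_square)
    also have "sqrt \<dots> = sqrt (2 * CD * C0 / l2) * sqrt ((s / q)^2)"
      by (rule real_sqrt_mult)
    also have "sqrt (2 * CD * C0 / l2) * sqrt ((s / q)^2) = sqrt (2 * CD * C0 / l2) * (s / q)" using s0 q0 by simp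
    also have "\<dots> \<le> sqrt (2 * CD * C0 / l2) * s * (1 + q) / (q * q)"
    proof -
      have "s / q \<le> s * (1 + q) / (q * q)" using s0 q0 by (simp add: field_simps)
      moreover have "sqrt (2 * CD * C0 / l2) \<ge> 0" using CD C0 l2 by simp
      ultimately have "sqrt (2 * CD * C0 / l2) * (s / q) \<le> sqrt (2 * CD * C0 / l2) * (s * (1 + q) / (q * q))"
        by (rule mult_left_mono)
      then show ?thesis by simp
    qed
    finally show ?thesis .
  qed
  have t4: "6 * \<gamma> * s * q / (l2 * P) \<le> 6 * \<gamma> / l2 * s * (1 + q) / (q * q)"
  proof -
    have "6 * \<gamma> * s * q \<le> 6 * \<gamma> * s * (1 + q)" using g s0 q0 by simp
    then show ?thesis unfolding Pq using l2 q0 by (simp add: field_simps)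
  qed
  have "4 * sqrt \<Delta> * r / l2 + min (CD * \<Delta>) (2 * r / l2)
      \<le> 4 * (C0 + 3 * \<gamma>) / l2 * s * (1 + q) / (q * q) + sqrt (2 * CD * C0 / l2) * s * (1 + q) / (q * q)
        + 6 * \<gamma> / l2 * s * (1 + q) / (q * q)"
    using t1 t2 t3 t4 by linarith
  also have "\<dots> = (4 * (C0 + 3 * \<gamma>) / l2 + sqrt (2 * CD * C0 / l2) + 6 * \<gamma> / l2) * sqrt \<Delta> * (1 + sqrt P) / P"
    unfolding s_def[symmetric] q_def[symmetric] Pq using q0 l2 by (simp add: field_simps)
  finally show ?thesis .
qed

lemma meas_le:
  assumes "l1 > 0" "l2 > 0" "emeasure (chan l1 l2) A \<le> ennreal b" "0 \<le> b"
  shows "measure (chan l1 l2) A \<le> b"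
proof -
  have "enn2real (emeasure (chan l1 l2) A) \<le> enn2real (ennreal b)"
    using assms by (intro enn2real_mono) auto
  then show ?thesis using assms by (simp add: measure_def)
qed

lemma mU:
  assumes l: "l1 > 0" "l2 > 0" and A: "A \<in> sets (borel \<Otimes>\<^sub>M borel)" and B: "B \<in> sets (borel \<Otimes>\<^sub>M borel)"
    and a: "measure (chan l1 l2) A \<le> a" and b: "measure (chan l1 l2) B \<le> b"
  shows "measure (chan l1 l2) (A \<union> B) \<le> a + b"
proof -
  interpret finite_measure "chan l1 l2" by (rule chan_finite[OF l])
  have "measure (chan l1 l2) (A \<union> B) \<le> measure (chan l1 l2) A + measure (chan l1 l2) B"
    using A B by (intro measure_subadditive) (auto simp: emeasure_finite)
  then show ?thesis using a b by simp
qed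

lemma mmono:
  assumes l: "l1 > 0" "l2 > 0" and "A \<subseteq> B" "B \<in> sets (borel \<Otimes>\<^sub>M borel)"
  shows "measure (chan l1 l2) A \<le> measure (chan l1 l2) B"
proof -
  interpret finite_measure "chan l1 l2" by (rule chan_finite[OF l])
  show ?thesis using assms by (intro finite_measure_mono) auto
qed

lemma mY:
  assumes l1: "l1 > 0" and l2: "l2 > 0" and x0: "x0 \<ge> 0" and m: "m \<ge> 0" and w: "w \<ge> 0"
    and f[measurable]: "f \<in> borel_measurable borel" and fm: "\<And>x. m \<le> f x"
  shows "measure (chan l1 l2) {(x, y). x0 \<le> x \<and> f x \<le> y \<and> y \<le> f x + w}
     \<le> exp (- x0 / l1) * (exp (- m / l2) / l2 * w)"
  by (rule meas_le[OF l1 l2 bandY[OF l1 l2 x0 m w f fm]]) (use l2 w in simp)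

lemma mX:
  assumes l1: "l1 > 0" and l2: "l2 > 0" and y0: "y0 \<ge> 0" and m: "m \<ge> 0" and w: "w \<ge> 0"
    and f[measurable]: "f \<in> borel_measurable borel" and fm: "\<And>y. m \<le> f y"
  shows "measure (chan l1 l2) {(x, y). y0 \<le> y \<and> f y \<le> x \<and> x \<le> f y + w}
     \<le> exp (- y0 / l2) * (exp (- m / l1) / l1 * w)"
  by (rule meas_le[OF l1 l2 bandX[OF l1 l2 y0 m w f fm]]) (use l1 w in simp)

lemma mR:
  assumes l1: "l1 > 0" and l2: "l2 > 0" and x0: "x0 \<ge> 0" and y0: "y0 \<ge> 0"
  shows "measure (chan l1 l2) {(x, y). x0 \<le> x \<and> y0 \<le> y} \<le> exp (- x0 / l1) * exp (- y0 / l2)"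
  by (rule meas_le[OF l1 l2 rect[OF l1 l2 x0 y0]]) simp

lemma mZ:
  assumes l1: "l1 > 0" and l2: "l2 > 0"
  shows "measure (chan l1 l2) {(x, y). x \<le> 0 \<or> y \<le> 0} \<le> 0"
  using zeroset[OF l1 l2] by (simp add: measure_def)


definition Ddp :: "real \<Rightarrow> real \<Rightarrow> real \<Rightarrow> real \<Rightarrow> real \<Rightarrow> real \<Rightarrow> bool" where
  "Ddp P \<gamma> \<Delta> M x y = (M < x \<or> M < y \<or> \<bar>x - y\<bar> < \<Delta> \<or> x < 2 * (1 + \<gamma>) * \<Delta> \<or> y < 2 * (1 + \<gamma>) * \<Delta>
         \<or> bandp P \<gamma> \<Delta> x y \<or> bandp P \<gamma> \<Delta> y x)"

lemma gfun_meas[measurable]: "(\<lambda>x. max 0 (gfun P \<gamma> x)) \<in> borel_measurable borel"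
  unfolding gfun_def by measurable

lemma sqrt_ge_self:
  assumes "0 \<le> \<Delta>" "\<Delta> \<le> 1" shows "\<Delta> \<le> sqrt \<Delta>"
proof -
  have a: "sqrt \<Delta> \<le> 1" using assms by simp
  have b: "\<Delta> = sqrt \<Delta> * sqrt \<Delta>" using assms by simp
  have c: "sqrt \<Delta> * sqrt \<Delta> \<le> sqrt \<Delta>" by (rule mult_left_le[OF a]) (simp add: assms)
  show ?thesis using b c by linarith
qed

lemma exp_mono_l:
  fixes l1 l2 t :: real
  assumes "l2 \<le> l1" "l2 > 0" "t \<ge> 0"
  shows "exp (- t / l2) \<le> exp (- t / l1)"
proof -
  have "inverse l1 \<le> inverse l2" using assms by (intro le_imp_inverse_le) auto
  then have "t * inverse l1 \<le> t * inverse l2" using assms by (intro mult_left_mono) auto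
  then have "t / l1 \<le> t / l2" by (simp add: divide_inverse)
  then show ?thesis by simp
qed

lemma bandp_pos:
  assumes "bandp P \<gamma> \<Delta> x y" "x > 0" "\<gamma> > 0"
  shows "max 0 (gfun P \<gamma> x) = gfun P \<gamma> x"
proof -
  have "P * x - \<gamma> * (\<gamma> + 1) > 0" using assms unfolding bandp_def by simp
  then have "gfun P \<gamma> x \<ge> 0" unfolding gfun_def using assms by simp
  then show ?thesis by simp
qed

lemma boundA:
  assumes l12: "l2 \<le> l1" and l2: "l2 > 0" and P: "P > 0" and D: "\<Delta> > 0" and D1: "\<Delta> \<le> 1"
    and g: "\<gamma> > 0" and M: "M \<ge> 0" and eM: "exp (- M / l1) = sqrt \<Delta>"
    and Sm: "S \<in> sets (borel \<Otimes>\<^sub>M borel)"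
    and S: "S \<subseteq> {(x, y). x \<le> 0 \<or> y \<le> 0} \<union> {(x, y). \<gamma> / P \<le> x \<and> \<gamma> / P \<le> y \<and> Ddp P \<gamma> \<Delta> M x y}"
  shows "measure (chan l1 l2) S \<le> exp (- \<gamma> / (P * l1)) * sqrt \<Delta> * (2 + (2 + 4 * (1 + \<gamma>) + 12 * (1 + \<gamma>) * (\<gamma> + 2)) / l2)"
proof -
  have l1: "l1 > 0" using l12 l2 by simp
  define p0 where "p0 = \<gamma> / P"
  have p0: "p0 > 0" unfolding p0_def using g P by simp
  define ee where "ee = exp (- p0 / l1)"
  have ee: "ee = exp (- \<gamma> / (P * l1))" unfolding ee_def p0_def by simp
  have ee0: "ee > 0" unfolding ee_def by simp
  have e2: "exp (- p0 / l2) \<le> ee" unfolding ee_def using exp_mono_l[OF l12 l2] p0 by simp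
  have eM2: "exp (- M / l2) \<le> sqrt \<Delta>" using exp_mono_l[OF l12 l2 M] unfolding eM .
  have sD: "\<Delta> \<le> sqrt \<Delta>" using D D1 by (intro sqrt_ge_self) auto
  have sD0: "sqrt \<Delta> \<ge> 0" using D by simp
  have il: "1 / l1 \<le> 1 / l2" using l12 l2 by (simp add: le_imp_inverse_le flip: inverse_eq_divide)
  define K0 where "K0 = 2 * (1 + \<gamma>)"
  define K2 where "K2 = 6 * (1 + \<gamma>) * (\<gamma> + 2)"
  have K0: "K0 \<ge> 0" and K2: "K2 \<ge> 0" unfolding K0_def K2_def using g by auto
  let ?mu = "measure (chan l1 l2)"
  define Z where "Z = {(x::real, y::real). x \<le> 0 \<or> y \<le> 0}"
  define A1 where "A1 = {(x::real, y::real). M \<le> x \<and> p0 \<le> y}"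
  define A2 where "A2 = {(x::real, y::real). p0 \<le> x \<and> M \<le> y}"
  define A3 where "A3 = {(x::real, y::real). p0 \<le> x \<and> max 0 (x - \<Delta>) \<le> y \<and> y \<le> max 0 (x - \<Delta>) + 2 * \<Delta>}"
  define A4 where "A4 = {(x::real, y::real). p0 \<le> y \<and> 0 \<le> x \<and> x \<le> 0 + K0 * \<Delta>}"
  define A5 where "A5 = {(x::real, y::real). p0 \<le> x \<and> 0 \<le> y \<and> y \<le> 0 + K0 * \<Delta>}"
  define A6 where "A6 = {(x::real, y::real). p0 \<le> x \<and> max 0 (gfun P \<gamma> x) \<le> y \<and> y \<le> max 0 (gfun P \<gamma> x) + K2 * \<Delta>}"
  define A7 where "A7 = {(x::real, y::real). p0 \<le> y \<and> max 0 (gfun P \<gamma> y) \<le> x \<and> x \<le> max 0 (gfun P \<gamma> y) + K2 * \<Delta>}"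
  have mZ': "Z \<in> sets (borel \<Otimes>\<^sub>M borel)" unfolding Z_def by (rule pairset_meas) measurable
  have m1: "A1 \<in> sets (borel \<Otimes>\<^sub>M borel)" unfolding A1_def by (rule pairset_meas) measurable
  have m2: "A2 \<in> sets (borel \<Otimes>\<^sub>M borel)" unfolding A2_def by (rule pairset_meas) measurable
  have m3: "A3 \<in> sets (borel \<Otimes>\<^sub>M borel)" unfolding A3_def by (rule pairset_meas) measurable
  have m4: "A4 \<in> sets (borel \<Otimes>\<^sub>M borel)" unfolding A4_def by (rule pairset_meas) measurable
  have m5: "A5 \<in> sets (borel \<Otimes>\<^sub>M borel)" unfolding A5_def by (rule pairset_meas) measurable
  have m6: "A6 \<in> sets (borel \<Otimes>\<^sub>M borel)" unfolding A6_def by (rule pairset_meas) measurable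
  have m7: "A7 \<in> sets (borel \<Otimes>\<^sub>M borel)" unfolding A7_def by (rule pairset_meas) measurable
  have bZ: "?mu Z \<le> 0" unfolding Z_def by (rule mZ[OF l1 l2])
  have b1: "?mu A1 \<le> ee * sqrt \<Delta> * 1"
  proof -
    have "?mu A1 \<le> exp (- M / l1) * exp (- p0 / l2)" unfolding A1_def by (rule mR[OF l1 l2 M]) (use p0 in simp)
    also have "\<dots> \<le> sqrt \<Delta> * ee" unfolding eM using e2 sD0 by (intro mult_left_mono) auto
    finally show ?thesis by (simp add: mult.commute)
  qed
  have b2: "?mu A2 \<le> ee * sqrt \<Delta> * 1"
  proof -
    have "?mu A2 \<le> exp (- p0 / l1) * exp (- M / l2)" unfolding A2_def by (rule mR[OF l1 l2 _ M]) (use p0 in simp)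
    also have "\<dots> \<le> ee * sqrt \<Delta>" unfolding ee_def[symmetric] using eM2 ee0 by (intro mult_left_mono) auto
    finally show ?thesis by simp
  qed
  have b3: "?mu A3 \<le> ee * sqrt \<Delta> * (2 / l2)"
  proof -
    have "?mu A3 \<le> exp (- p0 / l1) * (exp (- 0 / l2) / l2 * (2 * \<Delta>))"
      unfolding A3_def by (rule mY[OF l1 l2, where f="\<lambda>x. max 0 (x - \<Delta>)"]) (use p0 D in auto)
    also have "\<dots> = ee * (\<Delta> * (2 / l2))" unfolding ee_def by simp
    also have "\<dots> \<le> ee * (sqrt \<Delta> * (2 / l2))" using sD ee0 l2 by (intro mult_left_mono mult_right_mono) auto
    finally show ?thesis by simp
  qed
  have b4: "?mu A4 \<le> ee * sqrt \<Delta> * (K0 / l2)"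
  proof -
    have "?mu A4 \<le> exp (- p0 / l2) * (exp (- 0 / l1) / l1 * (K0 * \<Delta>))"
      unfolding A4_def by (rule mX[OF l1 l2, where f="\<lambda>y. 0"]) (use p0 D K0 in auto)
    also have "\<dots> = exp (- p0 / l2) * (\<Delta> * (K0 * (1 / l1)))" by simp
    also have "\<dots> \<le> ee * (sqrt \<Delta> * (K0 * (1 / l2)))"
      using e2 sD il K0 D l1 ee0 by (intro mult_mono) (auto intro: mult_left_mono)
    finally show ?thesis by simp
  qed
  have b5: "?mu A5 \<le> ee * sqrt \<Delta> * (K0 / l2)"
  proof -
    have "?mu A5 \<le> exp (- p0 / l1) * (exp (- 0 / l2) / l2 * (K0 * \<Delta>))"
      unfolding A5_def by (rule mY[OF l1 l2, where f="\<lambda>x. 0"]) (use p0 D K0 in auto)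
    also have "\<dots> = ee * (\<Delta> * (K0 / l2))" unfolding ee_def by simp
    also have "\<dots> \<le> ee * (sqrt \<Delta> * (K0 / l2))" using sD ee0 l2 K0 by (intro mult_left_mono mult_right_mono) auto
    finally show ?thesis by simp
  qed
  have b6: "?mu A6 \<le> ee * sqrt \<Delta> * (K2 / l2)"
  proof -
    have "?mu A6 \<le> exp (- p0 / l1) * (exp (- 0 / l2) / l2 * (K2 * \<Delta>))"
      unfolding A6_def by (rule mY[OF l1 l2, where f="\<lambda>x. max 0 (gfun P \<gamma> x)"]) (use p0 D K2 in auto)
    also have "\<dots> = ee * (\<Delta> * (K2 / l2))" unfolding ee_def by simp
    also have "\<dots> \<le> ee * (sqrt \<Delta> * (K2 / l2))" using sD ee0 l2 K2 by (intro mult_left_mono mult_right_mono) auto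
    finally show ?thesis by simp
  qed
  have b7: "?mu A7 \<le> ee * sqrt \<Delta> * (K2 / l2)"
  proof -
    have "?mu A7 \<le> exp (- p0 / l2) * (exp (- 0 / l1) / l1 * (K2 * \<Delta>))"
      unfolding A7_def by (rule mX[OF l1 l2, where f="\<lambda>y. max 0 (gfun P \<gamma> y)"]) (use p0 D K2 in auto)
    also have "\<dots> = exp (- p0 / l2) * (\<Delta> * (K2 * (1 / l1)))" by simp
    also have "\<dots> \<le> ee * (sqrt \<Delta> * (K2 * (1 / l2)))"
      using e2 sD il K2 D l1 ee0 by (intro mult_mono) (auto intro: mult_left_mono)
    finally show ?thesis by simp
  qed
  have sub: "S \<subseteq> Z \<union> A1 \<union> A2 \<union> A3 \<union> A4 \<union> A5 \<union> A6 \<union> A7"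
  proof
    fix z assume zS: "z \<in> S"
    obtain x y where z: "z = (x, y)" by (cases z)
    show "z \<in> Z \<union> A1 \<union> A2 \<union> A3 \<union> A4 \<union> A5 \<union> A6 \<union> A7"
    proof (cases "x \<le> 0 \<or> y \<le> 0")
      case True then show ?thesis unfolding z Z_def by simp
    next
      case False
      then have xy: "p0 \<le> x" "p0 \<le> y" "Ddp P \<gamma> \<Delta> M x y" using S zS z unfolding p0_def by auto
      have x0: "x > 0" and y0: "y > 0" using xy p0 by auto
      from xy(3) show ?thesis unfolding Ddp_def
      proof (elim disjE)
        assume "M < x" then show ?thesis unfolding z A1_def using xy by simp
      next
        assume "M < y" then show ?thesis unfolding z A2_def using xy by simp
      next
        assume "\<bar>x - y\<bar> < \<Delta>" then show ?thesis unfolding z A3_def using xy y0 by (auto simp: max_def)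
      next
        assume "x < 2 * (1 + \<gamma>) * \<Delta>" then show ?thesis unfolding z A4_def K0_def using xy x0 by simp
      next
        assume "y < 2 * (1 + \<gamma>) * \<Delta>" then show ?thesis unfolding z A5_def K0_def using xy y0 by simp
      next
        assume b: "bandp P \<gamma> \<Delta> x y"
        have mx: "max 0 (gfun P \<gamma> x) = gfun P \<gamma> x" by (rule bandp_pos[OF b x0 g])
        have "(x, y) \<in> A6" unfolding A6_def K2_def using xy b mx x0 y0 unfolding bandp_def by simp
        then show ?thesis unfolding z by simp
      next
        assume b: "bandp P \<gamma> \<Delta> y x"
        have mx: "max 0 (gfun P \<gamma> y) = gfun P \<gamma> y" by (rule bandp_pos[OF b y0 g])
        have "(x, y) \<in> A7" unfolding A7_def K2_def using xy b mx x0 y0 unfolding bandp_def by simp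
        then show ?thesis unfolding z by simp
      qed
    qed
  qed
  have "?mu S \<le> ?mu (Z \<union> A1 \<union> A2 \<union> A3 \<union> A4 \<union> A5 \<union> A6 \<union> A7)"
    by (rule mmono[OF l1 l2 sub]) (intro sets.Un mZ' m1 m2 m3 m4 m5 m6 m7)
  also have "\<dots> \<le> 0 + ee * sqrt \<Delta> * 1 + ee * sqrt \<Delta> * 1 + ee * sqrt \<Delta> * (2 / l2) + ee * sqrt \<Delta> * (K0 / l2)
      + ee * sqrt \<Delta> * (K0 / l2) + ee * sqrt \<Delta> * (K2 / l2) + ee * sqrt \<Delta> * (K2 / l2)"
    by (intro mU[OF l1 l2] sets.Un mZ' m1 m2 m3 m4 m5 m6 m7 bZ b1 b2 b3 b4 b5 b6 b7)
  also have "\<dots> = ee * sqrt \<Delta> * (2 + (2 + 2 * K0 + 2 * K2) / l2)"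
    by (simp add: algebra_simps add_divide_distrib)
  also have "\<dots> = exp (- \<gamma> / (P * l1)) * sqrt \<Delta> * (2 + (2 + 4 * (1 + \<gamma>) + 12 * (1 + \<gamma>) * (\<gamma> + 2)) / l2)"
    unfolding ee K0_def K2_def by (simp add: algebra_simps)
  finally show ?thesis .
qed

definition DAset :: "real \<Rightarrow> real \<Rightarrow> real \<Rightarrow> (real \<times> real) set" where
  "DAset P \<gamma> \<Delta> =
     {(x, y). \<gamma> / P \<le> x \<and> max 0 (x - \<Delta>) \<le> y \<and> y \<le> max 0 (x - \<Delta>) + 2 * \<Delta>}
   \<union> {(x, y). \<gamma> / P \<le> y \<and> 0 \<le> x \<and> x \<le> 0 + (2 * (1 + \<gamma>)) * \<Delta>}
   \<union> {(x, y). \<gamma> / P \<le> x \<and> 0 \<le> y \<and> y \<le> 0 + (2 * (1 + \<gamma>)) * \<Delta>}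
   \<union> {(x, y). \<gamma> / P \<le> x \<and> max 0 (gfun P \<gamma> x) \<le> y \<and> y \<le> max 0 (gfun P \<gamma> x) + (6 * (1 + \<gamma>) * (\<gamma> + 2)) * \<Delta>}
   \<union> {(x, y). \<gamma> / P \<le> y \<and> max 0 (gfun P \<gamma> y) \<le> x \<and> x \<le> max 0 (gfun P \<gamma> y) + (6 * (1 + \<gamma>) * (\<gamma> + 2)) * \<Delta>}"

lemma DA_meas: "DAset P \<gamma> \<Delta> \<in> sets (borel \<Otimes>\<^sub>M borel)"
  unfolding DAset_def by (intro sets.Un) (rule pairset_meas, measurable)+

lemma DA_mem:
  assumes P: "P > 0" and g: "\<gamma> > 0" and x: "\<gamma> / P \<le> x" and y: "\<gamma> / P \<le> y"
    and xM: "\<not> M < x" and yM: "\<not> M < y" and d: "Ddp P \<gamma> \<Delta> M x y"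
  shows "(x, y) \<in> DAset P \<gamma> \<Delta>"
proof -
  have p0: "\<gamma> / P > 0" using P g by simp
  have x0: "x > 0" and y0: "y > 0" using x y p0 by auto
  from d xM yM show ?thesis unfolding Ddp_def
  proof (elim disjE)
    assume "\<bar>x - y\<bar> < \<Delta>" then show ?thesis unfolding DAset_def using x y0 by (auto simp: max_def)
  next
    assume "x < 2 * (1 + \<gamma>) * \<Delta>" then show ?thesis unfolding DAset_def using y x0 by simp
  next
    assume "y < 2 * (1 + \<gamma>) * \<Delta>" then show ?thesis unfolding DAset_def using x y0 by simp
  next
    assume b: "bandp P \<gamma> \<Delta> x y"
    have mx: "max 0 (gfun P \<gamma> x) = gfun P \<gamma> x" by (rule bandp_pos[OF b x0 g])
    show ?thesis unfolding DAset_def using x b mx x0 y0 unfolding bandp_def by simp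
  next
    assume b: "bandp P \<gamma> \<Delta> y x"
    have mx: "max 0 (gfun P \<gamma> y) = gfun P \<gamma> y" by (rule bandp_pos[OF b y0 g])
    show ?thesis unfolding DAset_def using y b mx x0 y0 unfolding bandp_def by simp
  qed auto
qed

lemma DA_bound:
  assumes l12: "l2 \<le> l1" and l2: "l2 > 0" and P: "P > 0" and D: "\<Delta> > 0" and g: "\<gamma> > 0"
  shows "measure (chan l1 l2) (DAset P \<gamma> \<Delta>) \<le> exp (- \<gamma> / (P * l1)) * \<Delta> * ((2 + 4 * (1 + \<gamma>) + 12 * (1 + \<gamma>) * (\<gamma> + 2)) / l2)"
proof -
  have l1: "l1 > 0" using l12 l2 by simp
  define p0 where "p0 = \<gamma> / P"
  have p0: "p0 > 0" unfolding p0_def using g P by simp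
  define ee where "ee = exp (- p0 / l1)"
  have ee: "ee = exp (- \<gamma> / (P * l1))" unfolding ee_def p0_def by simp
  have ee0: "ee > 0" unfolding ee_def by simp
  have e2: "exp (- p0 / l2) \<le> ee" unfolding ee_def using exp_mono_l[OF l12 l2] p0 by simp
  have il: "1 / l1 \<le> 1 / l2" using l12 l2 by (simp add: le_imp_inverse_le flip: inverse_eq_divide)
  define K0 where "K0 = 2 * (1 + \<gamma>)"
  define K2 where "K2 = 6 * (1 + \<gamma>) * (\<gamma> + 2)"
  have K0: "K0 \<ge> 0" and K2: "K2 \<ge> 0" unfolding K0_def K2_def using g by auto
  let ?mu = "measure (chan l1 l2)"
  define A3 where "A3 = {(x::real, y::real). p0 \<le> x \<and> max 0 (x - \<Delta>) \<le> y \<and> y \<le> max 0 (x - \<Delta>) + 2 * \<Delta>}"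
  define A4 where "A4 = {(x::real, y::real). p0 \<le> y \<and> 0 \<le> x \<and> x \<le> 0 + K0 * \<Delta>}"
  define A5 where "A5 = {(x::real, y::real). p0 \<le> x \<and> 0 \<le> y \<and> y \<le> 0 + K0 * \<Delta>}"
  define A6 where "A6 = {(x::real, y::real). p0 \<le> x \<and> max 0 (gfun P \<gamma> x) \<le> y \<and> y \<le> max 0 (gfun P \<gamma> x) + K2 * \<Delta>}"
  define A7 where "A7 = {(x::real, y::real). p0 \<le> y \<and> max 0 (gfun P \<gamma> y) \<le> x \<and> x \<le> max 0 (gfun P \<gamma> y) + K2 * \<Delta>}"
  have DA: "DAset P \<gamma> \<Delta> = A3 \<union> A4 \<union> A5 \<union> A6 \<union> A7"
    unfolding DAset_def A3_def A4_def A5_def A6_def A7_def p0_def K0_def K2_def ..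
  have m3: "A3 \<in> sets (borel \<Otimes>\<^sub>M borel)" unfolding A3_def by (rule pairset_meas) measurable
  have m4: "A4 \<in> sets (borel \<Otimes>\<^sub>M borel)" unfolding A4_def by (rule pairset_meas) measurable
  have m5: "A5 \<in> sets (borel \<Otimes>\<^sub>M borel)" unfolding A5_def by (rule pairset_meas) measurable
  have m6: "A6 \<in> sets (borel \<Otimes>\<^sub>M borel)" unfolding A6_def by (rule pairset_meas) measurable
  have m7: "A7 \<in> sets (borel \<Otimes>\<^sub>M borel)" unfolding A7_def by (rule pairset_meas) measurable
  have b3: "?mu A3 \<le> ee * \<Delta> * (2 / l2)"
  proof -
    have "?mu A3 \<le> exp (- p0 / l1) * (exp (- 0 / l2) / l2 * (2 * \<Delta>))"
      unfolding A3_def by (rule mY[OF l1 l2, where f="\<lambda>x. max 0 (x - \<Delta>)"]) (use p0 D in auto)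
    also have "\<dots> = ee * \<Delta> * (2 / l2)" unfolding ee_def by simp
    finally show ?thesis .
  qed
  have b4: "?mu A4 \<le> ee * \<Delta> * (K0 / l2)"
  proof -
    have "?mu A4 \<le> exp (- p0 / l2) * (exp (- 0 / l1) / l1 * (K0 * \<Delta>))"
      unfolding A4_def by (rule mX[OF l1 l2, where f="\<lambda>y. 0"]) (use p0 D K0 in auto)
    also have "\<dots> = exp (- p0 / l2) * (\<Delta> * (K0 * (1 / l1)))" by simp
    also have "\<dots> \<le> ee * (\<Delta> * (K0 * (1 / l2)))"
      using e2 il K0 D l1 ee0 by (intro mult_mono) (auto intro: mult_left_mono)
    finally show ?thesis by simp
  qed
  have b5: "?mu A5 \<le> ee * \<Delta> * (K0 / l2)"
  proof -
    have "?mu A5 \<le> exp (- p0 / l1) * (exp (- 0 / l2) / l2 * (K0 * \<Delta>))"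
      unfolding A5_def by (rule mY[OF l1 l2, where f="\<lambda>x. 0"]) (use p0 D K0 in auto)
    also have "\<dots> = ee * \<Delta> * (K0 / l2)" unfolding ee_def by simp
    finally show ?thesis .
  qed
  have b6: "?mu A6 \<le> ee * \<Delta> * (K2 / l2)"
  proof -
    have "?mu A6 \<le> exp (- p0 / l1) * (exp (- 0 / l2) / l2 * (K2 * \<Delta>))"
      unfolding A6_def by (rule mY[OF l1 l2, where f="\<lambda>x. max 0 (gfun P \<gamma> x)"]) (use p0 D K2 in auto)
    also have "\<dots> = ee * \<Delta> * (K2 / l2)" unfolding ee_def by simp
    finally show ?thesis .
  qed
  have b7: "?mu A7 \<le> ee * \<Delta> * (K2 / l2)"
  proof -
    have "?mu A7 \<le> exp (- p0 / l2) * (exp (- 0 / l1) / l1 * (K2 * \<Delta>))"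
      unfolding A7_def by (rule mX[OF l1 l2, where f="\<lambda>y. max 0 (gfun P \<gamma> y)"]) (use p0 D K2 in auto)
    also have "\<dots> = exp (- p0 / l2) * (\<Delta> * (K2 * (1 / l1)))" by simp
    also have "\<dots> \<le> ee * (\<Delta> * (K2 * (1 / l2)))"
      using e2 il K2 D l1 ee0 by (intro mult_mono) (auto intro: mult_left_mono)
    finally show ?thesis by simp
  qed
  have "?mu (DAset P \<gamma> \<Delta>) \<le> ee * \<Delta> * (2 / l2) + ee * \<Delta> * (K0 / l2) + ee * \<Delta> * (K0 / l2)
      + ee * \<Delta> * (K2 / l2) + ee * \<Delta> * (K2 / l2)"
    unfolding DA by (intro mU[OF l1 l2] sets.Un m3 m4 m5 m6 m7 b3 b4 b5 b6 b7)
  also have "\<dots> = ee * \<Delta> * ((2 + 2 * K0 + 2 * K2) / l2)"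
    by (simp add: algebra_simps add_divide_distrib)
  also have "\<dots> = exp (- \<gamma> / (P * l1)) * \<Delta> * ((2 + 4 * (1 + \<gamma>) + 12 * (1 + \<gamma>) * (\<gamma> + 2)) / l2)"
    unfolding ee K0_def K2_def by (simp add: algebra_simps)
  finally show ?thesis .
qed

lemma boundB:
  assumes l12: "l2 \<le> l1" and l2: "l2 > 0" and P: "P > 0" and D: "\<Delta> > 0" and D1: "\<Delta> \<le> 1"
    and g: "\<gamma> > 0" and M: "M \<ge> 0" and eM: "exp (- M / l1) = sqrt \<Delta>"
    and S: "S \<subseteq> {(x, y). x \<le> 0 \<or> y \<le> 0} \<union> {(x, y). \<gamma> / P \<le> x \<and> \<gamma> / P \<le> y
        \<and> (P * x \<le> Rf P \<Delta> \<gamma> \<or> P * y \<le> Rf P \<Delta> \<gamma>) \<and> Ddp P \<gamma> \<Delta> M x y}"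
  shows "measure (chan l1 l2) S \<le>
    (4 * ((9 * \<gamma> + 9 * \<gamma>^2 + 4 * (1 + \<gamma>)^2) + 3 * \<gamma>) / l2
      + sqrt (2 * ((2 + 4 * (1 + \<gamma>) + 12 * (1 + \<gamma>) * (\<gamma> + 2)) / l2) * (9 * \<gamma> + 9 * \<gamma>^2 + 4 * (1 + \<gamma>)^2) / l2)
      + 6 * \<gamma> / l2) * sqrt \<Delta> * (1 + sqrt P) / P"
proof -
  have l1: "l1 > 0" using l12 l2 by simp
  define C0 where "C0 = 9 * \<gamma> + 9 * \<gamma>^2 + 4 * (1 + \<gamma>)^2"
  define CD where "CD = (2 + 4 * (1 + \<gamma>) + 12 * (1 + \<gamma>) * (\<gamma> + 2)) / l2"
  have C0: "C0 \<ge> 0" unfolding C0_def using g by simp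
  have CD: "CD \<ge> 0" unfolding CD_def using g l2 by simp
  define r where "r = Rf P \<Delta> \<gamma> / P"
  have r': "r = (C0 + 3 * \<gamma> * sqrt (\<Delta> * P)) / P" unfolding r_def Rf_def C0_def by (simp add: algebra_simps)
  have r0: "r \<ge> 0" unfolding r' using C0 g D P by simp
  have eM2: "exp (- M / l2) \<le> sqrt \<Delta>" using exp_mono_l[OF l12 l2 M] unfolding eM .
  have il: "1 / l1 \<le> 1 / l2" using l12 l2 by (simp add: le_imp_inverse_le flip: inverse_eq_divide)
  have sD0: "sqrt \<Delta> \<ge> 0" using D by simp
  let ?mu = "measure (chan l1 l2)"
  define Z where "Z = {(x::real, y::real). x \<le> 0 \<or> y \<le> 0}"
  define O1 where "O1 = {(x::real, y::real). M \<le> x \<and> 0 \<le> y \<and> y \<le> 0 + r}"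
  define O2 where "O2 = {(x::real, y::real). 0 \<le> y \<and> M \<le> x \<and> x \<le> M + r}"
  define O3 where "O3 = {(x::real, y::real). M \<le> y \<and> 0 \<le> x \<and> x \<le> 0 + r}"
  define O4 where "O4 = {(x::real, y::real). 0 \<le> x \<and> M \<le> y \<and> y \<le> M + r}"
  define F1 where "F1 = {(x::real, y::real). 0 \<le> y \<and> 0 \<le> x \<and> x \<le> 0 + r}"
  define F2 where "F2 = {(x::real, y::real). 0 \<le> x \<and> 0 \<le> y \<and> y \<le> 0 + r}"
  let ?DA = "DAset P \<gamma> \<Delta>"
  have mZ': "Z \<in> sets (borel \<Otimes>\<^sub>M borel)" unfolding Z_def by (rule pairset_meas) measurable
  have mo1: "O1 \<in> sets (borel \<Otimes>\<^sub>M borel)" unfolding O1_def by (rule pairset_meas) measurable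
  have mo2: "O2 \<in> sets (borel \<Otimes>\<^sub>M borel)" unfolding O2_def by (rule pairset_meas) measurable
  have mo3: "O3 \<in> sets (borel \<Otimes>\<^sub>M borel)" unfolding O3_def by (rule pairset_meas) measurable
  have mo4: "O4 \<in> sets (borel \<Otimes>\<^sub>M borel)" unfolding O4_def by (rule pairset_meas) measurable
  have mf1: "F1 \<in> sets (borel \<Otimes>\<^sub>M borel)" unfolding F1_def by (rule pairset_meas) measurable
  have mf2: "F2 \<in> sets (borel \<Otimes>\<^sub>M borel)" unfolding F2_def by (rule pairset_meas) measurable
  have mDA: "?DA \<in> sets (borel \<Otimes>\<^sub>M borel)" by (rule DA_meas)
  have mDF: "?DA \<inter> (F1 \<union> F2) \<in> sets (borel \<Otimes>\<^sub>M borel)" using mDA mf1 mf2 by (intro sets.Int sets.Un)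
  have bZ: "?mu Z \<le> 0" unfolding Z_def by (rule mZ[OF l1 l2])
  have bo1: "?mu O1 \<le> sqrt \<Delta> * r / l2"
  proof -
    have "?mu O1 \<le> exp (- M / l1) * (exp (- 0 / l2) / l2 * r)"
      unfolding O1_def by (rule mY[OF l1 l2, where f="\<lambda>x. 0"]) (use M r0 in auto)
    then show ?thesis unfolding eM by simp
  qed
  have bo2: "?mu O2 \<le> sqrt \<Delta> * r / l2"
  proof -
    have "?mu O2 \<le> exp (- 0 / l2) * (exp (- M / l1) / l1 * r)"
      unfolding O2_def by (rule mX[OF l1 l2, where f="\<lambda>y. M"]) (use M r0 in auto)
    also have "\<dots> = sqrt \<Delta> * r * (1 / l1)" unfolding eM by simp
    also have "\<dots> \<le> sqrt \<Delta> * r * (1 / l2)" using il sD0 r0 by (intro mult_left_mono) auto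
    finally show ?thesis by simp
  qed
  have bo3: "?mu O3 \<le> sqrt \<Delta> * r / l2"
  proof -
    have "?mu O3 \<le> exp (- M / l2) * (exp (- 0 / l1) / l1 * r)"
      unfolding O3_def by (rule mX[OF l1 l2, where f="\<lambda>y. 0"]) (use M r0 in auto)
    also have "\<dots> = exp (- M / l2) * (r * (1 / l1))" by simp
    also have "\<dots> \<le> sqrt \<Delta> * (r * (1 / l2))" using eM2 il r0 sD0 l1
      by (intro mult_mono mult_left_mono) auto
    finally show ?thesis by simp
  qed
  have bo4: "?mu O4 \<le> sqrt \<Delta> * r / l2"
  proof -
    have "?mu O4 \<le> exp (- 0 / l1) * (exp (- M / l2) / l2 * r)"
      unfolding O4_def by (rule mY[OF l1 l2, where f="\<lambda>x. M"]) (use M r0 in auto)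
    also have "\<dots> = exp (- M / l2) * (r / l2)" by simp
    also have "\<dots> \<le> sqrt \<Delta> * (r / l2)" using eM2 r0 l2 by (intro mult_right_mono) auto
    finally show ?thesis by simp
  qed
  have bf1: "?mu F1 \<le> r / l2"
  proof -
    have "?mu F1 \<le> exp (- 0 / l2) * (exp (- 0 / l1) / l1 * r)"
      unfolding F1_def by (rule mX[OF l1 l2, where f="\<lambda>y. 0"]) (use r0 in auto)
    also have "\<dots> = r * (1 / l1)" by simp
    also have "\<dots> \<le> r * (1 / l2)" using il r0 by (intro mult_left_mono) auto
    finally show ?thesis by simp
  qed
  have bf2: "?mu F2 \<le> r / l2"
  proof -
    have "?mu F2 \<le> exp (- 0 / l1) * (exp (- 0 / l2) / l2 * r)"
      unfolding F2_def by (rule mY[OF l1 l2, where f="\<lambda>x. 0"]) (use r0 in auto)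
    then show ?thesis by simp
  qed
  have bDA: "?mu ?DA \<le> CD * \<Delta>"
  proof -
    have "?mu ?DA \<le> exp (- \<gamma> / (P * l1)) * \<Delta> * CD" unfolding CD_def by (rule DA_bound[OF l12 l2 P D g])
    also have "\<dots> \<le> 1 * \<Delta> * CD" using g P l1 D CD by (intro mult_right_mono) auto
    finally show ?thesis by (simp add: mult.commute)
  qed
  have bDF: "?mu (?DA \<inter> (F1 \<union> F2)) \<le> min (CD * \<Delta>) (2 * r / l2)"
  proof -
    have "?mu (?DA \<inter> (F1 \<union> F2)) \<le> ?mu ?DA" by (rule mmono[OF l1 l2 _ mDA]) auto
    moreover have "?mu (?DA \<inter> (F1 \<union> F2)) \<le> ?mu (F1 \<union> F2)" by (rule mmono[OF l1 l2]) (auto intro: mf1 mf2)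
    moreover have "?mu (F1 \<union> F2) \<le> r / l2 + r / l2" by (rule mU[OF l1 l2 mf1 mf2 bf1 bf2])
    ultimately show ?thesis using bDA by simp
  qed
  have sub: "S \<subseteq> Z \<union> O1 \<union> O2 \<union> O3 \<union> O4 \<union> (?DA \<inter> (F1 \<union> F2))"
  proof
    fix z assume zS: "z \<in> S"
    obtain x y where z: "z = (x, y)" by (cases z)
    show "z \<in> Z \<union> O1 \<union> O2 \<union> O3 \<union> O4 \<union> (?DA \<inter> (F1 \<union> F2))"
    proof (cases "x \<le> 0 \<or> y \<le> 0")
      case True then show ?thesis unfolding z Z_def by simp
    next
      case False
      then have xy: "\<gamma> / P \<le> x" "\<gamma> / P \<le> y" "P * x \<le> Rf P \<Delta> \<gamma> \<or> P * y \<le> Rf P \<Delta> \<gamma>" "Ddp P \<gamma> \<Delta> M x y"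
        using S zS z by auto
      have x0: "x > 0" and y0: "y > 0" using False by auto
      have rr: "x \<le> r \<or> y \<le> r" using xy(3) P unfolding r_def by (auto simp: le_divide_eq mult.commute)
      show ?thesis
      proof (cases "M < x")
        case True
        from rr show ?thesis
        proof
          assume "y \<le> r" then show ?thesis unfolding z O1_def using True y0 by simp
        next
          assume "x \<le> r" then show ?thesis unfolding z O2_def using True y0 M by simp
        qed
      next
        case nx: False
        show ?thesis
        proof (cases "M < y")
          case True
          from rr show ?thesis
          proof
            assume "x \<le> r" then show ?thesis unfolding z O3_def using True x0 by simp
          next
            assume "y \<le> r" then show ?thesis unfolding z O4_def using True x0 M by simp
          qed
        next
          case ny: False
          have "(x, y) \<in> ?DA" by (rule DA_mem[OF P g xy(1) xy(2) nx ny xy(4)])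
          moreover have "(x, y) \<in> F1 \<union> F2" using rr x0 y0 unfolding F1_def F2_def by auto
          ultimately show ?thesis unfolding z by simp
        qed
      qed
    qed
  qed
  have "?mu S \<le> ?mu (Z \<union> O1 \<union> O2 \<union> O3 \<union> O4 \<union> (?DA \<inter> (F1 \<union> F2)))"
    by (rule mmono[OF l1 l2 sub]) (intro sets.Un mZ' mo1 mo2 mo3 mo4 mDF)
  also have "\<dots> \<le> 0 + sqrt \<Delta> * r / l2 + sqrt \<Delta> * r / l2 + sqrt \<Delta> * r / l2 + sqrt \<Delta> * r / l2 + min (CD * \<Delta>) (2 * r / l2)"
    by (intro mU[OF l1 l2] sets.Un mZ' mo1 mo2 mo3 mo4 mDF bZ bo1 bo2 bo3 bo4 bDF)
  also have "\<dots> = 4 * sqrt \<Delta> * r / l2 + min (CD * \<Delta>) (2 * r / l2)" by simp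
  also have "\<dots> \<le> (4 * (C0 + 3 * \<gamma>) / l2 + sqrt (2 * CD * C0 / l2) + 6 * \<gamma> / l2) * sqrt \<Delta> * (1 + sqrt P) / P"
    by (rule arithB[OF P D D1 g l2 CD C0 r'])
  finally show ?thesis unfolding C0_def CD_def .
qed

lemma rmax_meas: "{(h1, h2). rmax P h1 h2 < rth} \<in> sets (borel \<Otimes>\<^sub>M borel)"
  by (rule pairset_meas) (unfold rmax_def Afun_def, measurable)

lemma M_lower:
  fixes l1 \<Delta> :: real
  assumes l1: "l1 > 0" and D: "\<Delta> > 0" and D1: "\<Delta> \<le> 1"
  shows "min (exp (- 1)) (l1 / 2) \<le> l1 / 2 * ln (1 / \<Delta>) + \<Delta>"
proof (cases "exp (- 1) \<le> \<Delta>")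
  case True
  have "ln (1 / \<Delta>) \<ge> 0" using D D1 by simp
  then have "l1 / 2 * ln (1 / \<Delta>) \<ge> 0" using l1 by simp
  then show ?thesis using True by linarith
next
  case False
  then have "ln \<Delta> < ln (exp (- 1))" using D by (subst ln_less_cancel_iff) auto
  then have "ln (1 / \<Delta>) > 1" using D by (simp add: ln_div)
  then have "l1 / 2 * ln (1 / \<Delta>) > l1 / 2 * 1" using l1 by (intro mult_strict_left_mono) auto
  then show ?thesis using D by linarith
qed

lemma eM_lemma:
  fixes l1 \<Delta> :: real
  assumes l1: "l1 > 0" and D: "\<Delta> > 0"
  shows "exp (- (l1 / 2 * ln (1 / \<Delta>)) / l1) = sqrt \<Delta>"
proof -
  have "- (l1 / 2 * ln (1 / \<Delta>)) / l1 = ln \<Delta> * (1 / 2)" using l1 D by (simp add: ln_div field_simps)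
  then have "exp (- (l1 / 2 * ln (1 / \<Delta>)) / l1) = \<Delta> powr (1 / 2)" using D by (simp add: powr_def)
  also have "\<dots> = sqrt \<Delta>" using D by (simp add: powr_half_sqrt)
  finally show ?thesis .
qed

theorem corollary2:
  fixes l1 l2 rth :: real
  assumes "l1 \<ge> l2" and "l2 > 0" and "rth > 0"
  shows "\<exists>C5 C6. C5 > 0 \<and> C6 > 0 \<and>
     (\<forall>P \<Delta>. P > 0 \<longrightarrow> 0 < \<Delta> \<longrightarrow> \<Delta> \<le> 1 \<longrightarrow>
        out_loss l1 l2 P rth \<Delta> (l1 / (2 * \<Delta>) * ln (1 / \<Delta>))
          \<le> C5 * exp (- C6 / P) * (1 + sqrt P) / P * sqrt \<Delta>)"
proof -
  note l12 = assms(1) and l2 = assms(2) and rth = assms(3)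
  have l1: "l1 > 0" using l12 l2 by simp
  define \<gamma> where "\<gamma> = 2 powr rth - 1"
  have g: "\<gamma> > 0" unfolding \<gamma>_def using rth by simp
  define CA where "CA = 2 + (2 + 4 * (1 + \<gamma>) + 12 * (1 + \<gamma>) * (\<gamma> + 2)) / l2"
  define CB where "CB = 4 * ((9 * \<gamma> + 9 * \<gamma>^2 + 4 * (1 + \<gamma>)^2) + 3 * \<gamma>) / l2
      + sqrt (2 * ((2 + 4 * (1 + \<gamma>) + 12 * (1 + \<gamma>) * (\<gamma> + 2)) / l2) * (9 * \<gamma> + 9 * \<gamma>^2 + 4 * (1 + \<gamma>)^2) / l2)
      + 6 * \<gamma> / l2"
  define m0 where "m0 = min (exp (- 1)) (l1 / 2)"
  define Ps where "Ps = max 1 (4 * (1 + \<gamma>)^2 / m0)"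
  define C6 where "C6 = \<gamma> / l1"
  define C5 where "C5 = CA * Ps + CB * exp (\<gamma> / l1)"
  have CA: "CA > 0" unfolding CA_def using g l2 by (simp add: add_pos_nonneg)
  have CB: "CB \<ge> 0" unfolding CB_def using g l2 by (simp add: add_nonneg_nonneg)
  have m0: "m0 > 0" unfolding m0_def using l1 by simp
  have Ps1: "Ps \<ge> 1" unfolding Ps_def by simp
  have C6: "C6 > 0" unfolding C6_def using g l1 by simp
  have C5: "C5 > 0" unfolding C5_def using CA CB Ps1 by (simp add: add_pos_nonneg)
  have main: "out_loss l1 l2 P rth \<Delta> (l1 / (2 * \<Delta>) * ln (1 / \<Delta>))
          \<le> C5 * exp (- C6 / P) * (1 + sqrt P) / P * sqrt \<Delta>"
    if P: "P > 0" and D: "0 < \<Delta>" and D1: "\<Delta> \<le> 1" for P \<Delta>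
  proof -
    define T where "T = l1 / (2 * \<Delta>) * ln (1 / \<Delta>)"
    define M where "M = l1 / 2 * ln (1 / \<Delta>)"
    have TM: "T * \<Delta> = M" unfolding T_def M_def using D by (simp add: field_simps)
    have M: "M \<ge> 0" unfolding M_def using l1 D D1 by simp
    have eM: "exp (- M / l1) = sqrt \<Delta>" unfolding M_def by (rule eM_lemma[OF l1 D])
    have Mm0: "m0 \<le> M + \<Delta>" unfolding m0_def M_def by (rule M_lower[OF l1 D D1])
    define Q where "Q = {(h1, h2). rq P \<Delta> T h1 h2 < rth}"
    define R where "R = {(h1, h2). rmax P h1 h2 < rth}"
    let ?mu = "measure (chan l1 l2)"
    have RHS0: "0 \<le> C5 * exp (- C6 / P) * (1 + sqrt P) / P * sqrt \<Delta>"
      using C5 P D by simp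
    have loss: "out_loss l1 l2 P rth \<Delta> T = ?mu Q - ?mu R"
      unfolding out_loss_def out_q_def out_min_def Q_def R_def ..
    show ?thesis
    proof (cases "Q \<in> sets (borel \<Otimes>\<^sub>M borel)")
      case False
      then have "?mu Q = 0" by (intro measure_notin_sets) simp
      then have "out_loss l1 l2 P rth \<Delta> T \<le> 0" unfolding loss by simp
      then show ?thesis using RHS0 unfolding T_def by linarith
    next
      case Qm: True
      have Rm: "R \<in> sets (borel \<Otimes>\<^sub>M borel)" unfolding R_def by (rule rmax_meas)
      have QRm: "Q - R \<in> sets (borel \<Otimes>\<^sub>M borel)" using Qm Rm by (rule sets.Diff)
      have U: "(Q - R) \<union> R \<in> sets (borel \<Otimes>\<^sub>M borel)" by (rule sets.Un[OF QRm Rm])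
      have "?mu Q \<le> ?mu ((Q - R) \<union> R)" by (rule mmono[OF l1 l2 _ U]) auto
      also have "\<dots> \<le> ?mu (Q - R) + ?mu R" by (rule mU[OF l1 l2 QRm Rm]) auto
      finally have lossle: "out_loss l1 l2 P rth \<Delta> T \<le> ?mu (Q - R)" unfolding loss by simp
      have pts: "\<And>h1 h2. (h1, h2) \<in> Q - R \<Longrightarrow> h1 > 0 \<Longrightarrow> h2 > 0 \<Longrightarrow>
          (\<gamma> \<le> P * h1 \<and> \<gamma> \<le> P * h2)
          \<and> (P * h1 \<le> Rf P \<Delta> \<gamma> \<or> P * h2 \<le> Rf P \<Delta> \<gamma> \<or> P * (M + \<Delta>) < 4 * (1 + \<gamma>)^2)
          \<and> Ddp P \<gamma> \<Delta> M h1 h2"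
      proof -
        fix h1 h2 assume h: "(h1, h2) \<in> Q - R" "h1 > 0" "h2 > 0"
        have q: "rq P \<Delta> T h1 h2 < rth" and r: "\<not> rmax P h1 h2 < rth" using h(1) unfolding Q_def R_def by auto
        note pp = pt[OF P rth D TM M h(2) h(3) \<gamma>_def q r]
        show "(\<gamma> \<le> P * h1 \<and> \<gamma> \<le> P * h2)
          \<and> (P * h1 \<le> Rf P \<Delta> \<gamma> \<or> P * h2 \<le> Rf P \<Delta> \<gamma> \<or> P * (M + \<Delta>) < 4 * (1 + \<gamma>)^2)
          \<and> Ddp P \<gamma> \<Delta> M h1 h2" using pp unfolding Ddp_def by blast
      qed
      have gP: "\<And>h. \<gamma> \<le> P * h \<Longrightarrow> \<gamma> / P \<le> h" using P by (simp add: divide_le_eq mult.commute)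
      have ee: "exp (- C6 / P) = exp (- \<gamma> / (P * l1))" unfolding C6_def by (simp add: field_simps)
      show ?thesis
      proof (cases "P \<le> Ps")
        case True
        have sub: "Q - R \<subseteq> {(x, y). x \<le> 0 \<or> y \<le> 0} \<union> {(x, y). \<gamma> / P \<le> x \<and> \<gamma> / P \<le> y \<and> Ddp P \<gamma> \<Delta> M x y}"
        proof
          fix z assume z: "z \<in> Q - R"
          obtain h1 h2 where zz: "z = (h1, h2)" by (cases z)
          show "z \<in> {(x, y). x \<le> 0 \<or> y \<le> 0} \<union> {(x, y). \<gamma> / P \<le> x \<and> \<gamma> / P \<le> y \<and> Ddp P \<gamma> \<Delta> M x y}"
          proof (cases "h1 \<le> 0 \<or> h2 \<le> 0")
            case True then show ?thesis unfolding zz by simp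
          next
            case False
            then have "h1 > 0" "h2 > 0" by auto
            with pts[of h1 h2] z zz gP show ?thesis by auto
          qed
        qed
        have "?mu (Q - R) \<le> exp (- \<gamma> / (P * l1)) * sqrt \<Delta> * CA"
          unfolding CA_def by (rule boundA[OF l12 l2 P D D1 g M eM QRm sub])
        also have "\<dots> \<le> exp (- \<gamma> / (P * l1)) * sqrt \<Delta> * (C5 * (1 + sqrt P) / P)"
        proof -
          have "CA = CA * Ps * (1 / Ps)" using Ps1 by simp
          also have "\<dots> \<le> CA * Ps * (1 / P)" using CA Ps1 True P
            by (intro mult_left_mono) (auto simp: frac_le)
          also have "\<dots> \<le> C5 * ((1 + sqrt P) / P)"
          proof (intro mult_mono)
            show "CA * Ps \<le> C5" unfolding C5_def using CB by simp
            show "1 / P \<le> (1 + sqrt P) / P" using P by (simp add: divide_right_mono)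
          qed (use C5 P in auto)
          finally show ?thesis using P D by (intro mult_left_mono) auto
        qed
        also have "\<dots> = C5 * exp (- C6 / P) * (1 + sqrt P) / P * sqrt \<Delta>" unfolding ee by simp
        finally show ?thesis using lossle unfolding T_def by linarith
      next
        case False
        then have Pbig: "P > Ps" by simp
        then have P1: "P \<ge> 1" using Ps1 by simp
        have "4 * (1 + \<gamma>)^2 / m0 \<le> Ps" unfolding Ps_def by simp
        then have "4 * (1 + \<gamma>)^2 / m0 * m0 \<le> Ps * m0" using m0 by (intro mult_right_mono) auto
        then have "4 * (1 + \<gamma>)^2 \<le> Ps * m0" using m0 by simp
        also have "\<dots> \<le> P * (M + \<Delta>)" using Pbig Mm0 m0 Ps1 by (intro mult_mono) auto
        finally have nB: "\<not> P * (M + \<Delta>) < 4 * (1 + \<gamma>)^2" by simp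
        have sub: "Q - R \<subseteq> {(x, y). x \<le> 0 \<or> y \<le> 0} \<union> {(x, y). \<gamma> / P \<le> x \<and> \<gamma> / P \<le> y
            \<and> (P * x \<le> Rf P \<Delta> \<gamma> \<or> P * y \<le> Rf P \<Delta> \<gamma>) \<and> Ddp P \<gamma> \<Delta> M x y}"
        proof
          fix z assume z: "z \<in> Q - R"
          obtain h1 h2 where zz: "z = (h1, h2)" by (cases z)
          show "z \<in> {(x, y). x \<le> 0 \<or> y \<le> 0} \<union> {(x, y). \<gamma> / P \<le> x \<and> \<gamma> / P \<le> y
            \<and> (P * x \<le> Rf P \<Delta> \<gamma> \<or> P * y \<le> Rf P \<Delta> \<gamma>) \<and> Ddp P \<gamma> \<Delta> M x y}"
          proof (cases "h1 \<le> 0 \<or> h2 \<le> 0")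
            case True then show ?thesis unfolding zz by simp
          next
            case False
            then have "h1 > 0" "h2 > 0" by auto
            with pts[of h1 h2] z zz gP nB show ?thesis by auto
          qed
        qed
        have "?mu (Q - R) \<le> CB * sqrt \<Delta> * (1 + sqrt P) / P"
          unfolding CB_def by (rule boundB[OF l12 l2 P D D1 g M eM sub])
        also have "\<dots> \<le> C5 * exp (- C6 / P) * (1 + sqrt P) / P * sqrt \<Delta>"
        proof -
          have "CB \<le> C5 * exp (- C6 / P)"
          proof -
            have "C6 / P \<le> C6" using P1 C6 by (simp add: divide_le_eq)
            then have "exp (- C6) \<le> exp (- C6 / P)" by simp
            then have "CB * exp (\<gamma> / l1) * exp (- C6) \<le> CB * exp (\<gamma> / l1) * exp (- C6 / P)"
              using CB by (intro mult_left_mono) auto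
            moreover have "CB * exp (\<gamma> / l1) * exp (- C6) = CB"
              unfolding C6_def by (simp add: exp_minus field_simps)
            moreover have "CB * exp (\<gamma> / l1) \<le> C5" unfolding C5_def using CA Ps1 by simp
            moreover have "CB * exp (\<gamma> / l1) * exp (- C6 / P) \<le> C5 * exp (- C6 / P)"
              using \<open>CB * exp (\<gamma> / l1) \<le> C5\<close> by (intro mult_right_mono) auto
            ultimately show ?thesis by linarith
          qed
          then have "CB * (sqrt \<Delta> * (1 + sqrt P) / P) \<le> C5 * exp (- C6 / P) * (sqrt \<Delta> * (1 + sqrt P) / P)"
            using P D by (intro mult_right_mono) auto
          then show ?thesis by (simp add: mult.commute mult.left_commute)
        qed
        finally show ?thesis using lossle unfolding T_def by linarith
      qed
    qed
  qed
  show ?thesis using C5 C6 main by blast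
qed

end
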